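(* Let $(W,S)$ be a Coxeter system with $S$ finite and $\phi:\operatorname{Ad}(Q_W)\to W$ the homomorphism $e_x\mapsto x$. Then $\phi$ restricts to an isomorphism $[\operatorname{Ad}(Q_W),\operatorname{Ad}(Q_W)]\xrightarrow{\cong}[W,W]$ of commutator subgroups.
   Context: A Coxeter system $(W,S)$: $S$ finite, $m:S\times S\to\mathbb{N}\cup\{\infty\}$ with $m(s,s)=1$, $2\le m(s,t)=m(t,s)\le\infty$ for $s\ne t$, $W=\langle s\in S\mid (st)^{m(s,t)}=1\ (m(s,t)<\infty)\rangle$. The Coxeter quandle $Q_W=\bigcup_{w\in W}w^{-1}Sw$ has operation $x\ast y=yxy$, and $\operatorname{Ad}(Q_W)=\langle e_x\ (x\in Q_W)\mid e_y^{-1}e_xe_y=e_{x\ast y}\ (x,y\in Q_W)\rangle$. *)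

theory Defs
  imports "HOL-Algebra.Algebra" "HOL-Library.Extended_Nat"
begin

text \<open>A word over a generating set: a list of letters (x, True) = x and (x, False) = x^-1.\<close>
type_synonym 'g word = "('g \<times> bool) list"

inductive pres_rel :: "'g set \<Rightarrow> 'g word set \<Rightarrow> 'g word \<Rightarrow> 'g word \<Rightarrow> bool"
  for Xg :: "'g set" and Rl :: "'g word set" where
  pr_refl: "pres_rel Xg Rl w w"
| pr_sym: "pres_rel Xg Rl v w \<Longrightarrow> pres_rel Xg Rl w v"
| pr_trans: "pres_rel Xg Rl u v \<Longrightarrow> pres_rel Xg Rl v w \<Longrightarrow> pres_rel Xg Rl u w"
| pr_cancel: "x \<in> Xg \<Longrightarrow> pres_rel Xg Rl (u @ [(x, b), (x, \<not> b)] @ v) (u @ v)"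
| pr_rel: "r \<in> Rl \<Longrightarrow> pres_rel Xg Rl (u @ r @ v) (u @ v)"

definition pres_class :: "'g set \<Rightarrow> 'g word set \<Rightarrow> 'g word \<Rightarrow> 'g word set" where
  "pres_class Xg Rl w = {v. v \<in> lists (Xg \<times> UNIV) \<and> pres_rel Xg Rl w v}"

definition presented_group :: "'g set \<Rightarrow> 'g word set \<Rightarrow> 'g word set monoid" where
  "presented_group Xg Rl =
     \<lparr> carrier = pres_class Xg Rl ` lists (Xg \<times> UNIV),
       monoid.mult = (\<lambda>A B. pres_class Xg Rl ((SOME a. a \<in> A) @ (SOME b. b \<in> B))),
       monoid.one = pres_class Xg Rl [] \<rparr>"

definition pres_gen :: "'g set \<Rightarrow> 'g word set \<Rightarrow> 'g \<Rightarrow> 'g word set" where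
  "pres_gen Xg Rl x = pres_class Xg Rl [(x, True)]"

definition eval_word :: "('a, 'b) monoid_scheme \<Rightarrow> ('g \<Rightarrow> 'a) \<Rightarrow> 'g word \<Rightarrow> 'a" where
  "eval_word G f w =
     foldr (\<lambda>(x, b) acc. (if b then f x else inv\<^bsub>G\<^esub> (f x)) \<otimes>\<^bsub>G\<^esub> acc) w \<one>\<^bsub>G\<^esub>"

definition coxeter_matrix :: "'s set \<Rightarrow> ('s \<Rightarrow> 's \<Rightarrow> enat) \<Rightarrow> bool" where
  "coxeter_matrix S m \<longleftrightarrow> finite S \<and>
     (\<forall>s\<in>S. m s s = 1) \<and>
     (\<forall>s\<in>S. \<forall>t\<in>S. s \<noteq> t \<longrightarrow> 2 \<le> m s t \<and> m s t = m t s)"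

definition coxeter_rels :: "'s set \<Rightarrow> ('s \<Rightarrow> 's \<Rightarrow> enat) \<Rightarrow> 's word set" where
  "coxeter_rels S m = {concat (replicate k [(s, True), (t, True)]) | s t k.
      s \<in> S \<and> t \<in> S \<and> m s t = enat k}"

definition coxeter_group :: "'s set \<Rightarrow> ('s \<Rightarrow> 's \<Rightarrow> enat) \<Rightarrow> 's word set monoid" where
  "coxeter_group S m = presented_group S (coxeter_rels S m)"

definition coxeter_quandle :: "'s set \<Rightarrow> ('s \<Rightarrow> 's \<Rightarrow> enat) \<Rightarrow> 's word set set" where
  "coxeter_quandle S m =
     {inv\<^bsub>coxeter_group S m\<^esub> w \<otimes>\<^bsub>coxeter_group S m\<^esub>
        pres_gen S (coxeter_rels S m) s \<otimes>\<^bsub>coxeter_group S m\<^esub> w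
      | w s. w \<in> carrier (coxeter_group S m) \<and> s \<in> S}"

definition quandle_op :: "'s set \<Rightarrow> ('s \<Rightarrow> 's \<Rightarrow> enat) \<Rightarrow> 's word set \<Rightarrow> 's word set \<Rightarrow> 's word set" where
  "quandle_op S m x y = y \<otimes>\<^bsub>coxeter_group S m\<^esub> x \<otimes>\<^bsub>coxeter_group S m\<^esub> y"

definition adjoint_rels :: "'s set \<Rightarrow> ('s \<Rightarrow> 's \<Rightarrow> enat) \<Rightarrow> 's word set word set" where
  "adjoint_rels S m = {[(y, False), (x, True), (y, True), (quandle_op S m x y, False)] | x y.
      x \<in> coxeter_quandle S m \<and> y \<in> coxeter_quandle S m}"

definition adjoint_group :: "'s set \<Rightarrow> ('s \<Rightarrow> 's \<Rightarrow> enat) \<Rightarrow> 's word set word set monoid" where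
  "adjoint_group S m = presented_group (coxeter_quandle S m) (adjoint_rels S m)"

definition adjoint_phi :: "'s set \<Rightarrow> ('s \<Rightarrow> 's \<Rightarrow> enat) \<Rightarrow> 's word set word set \<Rightarrow> 's word set" where
  "adjoint_phi S m A = eval_word (coxeter_group S m) (\<lambda>x. x) (SOME w. w \<in> A)"

end

theory Submission imports Defs begin


lemma pres_rel_app_left: "pres_rel Xg Rl u u' \<Longrightarrow> pres_rel Xg Rl (v @ u) (v @ u')"
proof (induction rule: pres_rel.induct)
  case (pr_cancel x u1 b w)
  then show ?case by (metis append_assoc pres_rel.pr_cancel)
next
  case (pr_rel r u1 w)
  then show ?case by (metis append_assoc pres_rel.pr_rel)
qed (auto intro: pres_rel.intros)

lemma pres_rel_app_right: "pres_rel Xg Rl u u' \<Longrightarrow> pres_rel Xg Rl (u @ v) (u' @ v)"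
proof (induction rule: pres_rel.induct)
  case (pr_cancel x u1 b w)
  then show ?case by (metis append_assoc pres_rel.pr_cancel)
next
  case (pr_rel r u1 w)
  then show ?case by (metis append_assoc pres_rel.pr_rel)
qed (auto intro: pres_rel.intros)

lemma pres_rel_app: "pres_rel Xg Rl u u' \<Longrightarrow> pres_rel Xg Rl v v' \<Longrightarrow> pres_rel Xg Rl (u @ v) (u' @ v')"
  by (meson pres_rel.pr_trans pres_rel_app_left pres_rel_app_right)

definition invw :: "'g word \<Rightarrow> 'g word" where
  "invw w = rev (map (\<lambda>(x, b). (x, \<not> b)) w)"

lemma invw_Cons[simp]: "invw (a # w) = invw w @ [(fst a, \<not> snd a)]"
  by (cases a) (simp add: invw_def)

lemma invw_Nil[simp]: "invw [] = []" by (simp add: invw_def)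

lemma invw_lists: "w \<in> lists (Xg \<times> UNIV) \<Longrightarrow> invw w \<in> lists (Xg \<times> UNIV)"
  by (auto simp: invw_def)

lemma invw_invw[simp]: "invw (invw w) = w"
  by (induction w) (auto simp: invw_def rev_map)

lemma pres_rel_invw_right: "w \<in> lists (Xg \<times> UNIV) \<Longrightarrow> pres_rel Xg Rl (w @ invw w) []"
proof (induction w)
  case Nil
  then show ?case by (simp add: pres_rel.pr_refl)
next
  case (Cons a w)
  obtain x b where a: "a = (x, b)" by (cases a)
  have x: "x \<in> Xg" using Cons a by auto
  have "pres_rel Xg Rl ([a] @ (w @ invw w) @ [(x, \<not> b)]) ([a] @ [] @ [(x, \<not> b)])"
    using Cons by (intro pres_rel_app pres_rel.pr_refl) auto
  moreover have "pres_rel Xg Rl ([] @ [(x, b), (x, \<not> b)] @ []) ([] @ [])"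
    using x by (rule pres_rel.pr_cancel)
  ultimately show ?case using a by (auto intro: pres_rel.pr_trans)
qed

lemma pres_rel_invw_left: "w \<in> lists (Xg \<times> UNIV) \<Longrightarrow> pres_rel Xg Rl (invw w @ w) []"
  using pres_rel_invw_right[of "invw w" Xg Rl] invw_lists[of w Xg] by simp

lemma pres_class_eq: "pres_rel Xg Rl w v \<Longrightarrow> pres_class Xg Rl w = pres_class Xg Rl v"
  unfolding pres_class_def by (meson pres_rel.pr_sym pres_rel.pr_trans)

lemma pres_class_self: "w \<in> lists (Xg \<times> UNIV) \<Longrightarrow> w \<in> pres_class Xg Rl w"
  unfolding pres_class_def by (simp add: pres_rel.pr_refl)

lemma pres_class_eq_iff:
  "w \<in> lists (Xg \<times> UNIV) \<Longrightarrow> v \<in> lists (Xg \<times> UNIV) \<Longrightarrow>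
   pres_class Xg Rl w = pres_class Xg Rl v \<longleftrightarrow> pres_rel Xg Rl w v"
proof
  assume "w \<in> lists (Xg \<times> UNIV)" "v \<in> lists (Xg \<times> UNIV)" "pres_class Xg Rl w = pres_class Xg Rl v"
  then have "v \<in> pres_class Xg Rl w" using pres_class_self by metis
  then show "pres_rel Xg Rl w v" unfolding pres_class_def by simp
qed (rule pres_class_eq)

lemma some_class:
  assumes "w \<in> lists (Xg \<times> UNIV)"
  shows "(SOME a. a \<in> pres_class Xg Rl w) \<in> lists (Xg \<times> UNIV)
     \<and> pres_rel Xg Rl w (SOME a. a \<in> pres_class Xg Rl w)"
proof -
  have "\<exists>a. a \<in> pres_class Xg Rl w" using pres_class_self[OF assms] by blast
  then have "(SOME a. a \<in> pres_class Xg Rl w) \<in> pres_class Xg Rl w" by (rule someI_ex)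
  then show ?thesis unfolding pres_class_def by auto
qed

lemma pres_mult:
  assumes "u \<in> lists (Xg \<times> UNIV)" "v \<in> lists (Xg \<times> UNIV)"
  shows "pres_class Xg Rl u \<otimes>\<^bsub>presented_group Xg Rl\<^esub> pres_class Xg Rl v = pres_class Xg Rl (u @ v)"
proof -
  let ?a = "SOME a. a \<in> pres_class Xg Rl u" and ?b = "SOME b. b \<in> pres_class Xg Rl v"
  have "pres_rel Xg Rl (u @ v) (?a @ ?b)"
    using some_class[OF assms(1)] some_class[OF assms(2)] by (intro pres_rel_app) auto
  then show ?thesis unfolding presented_group_def by (simp add: pres_class_eq)
qed

lemma pres_carrier: "carrier (presented_group Xg Rl) = pres_class Xg Rl ` lists (Xg \<times> UNIV)"
  by (simp add: presented_group_def)

lemma pres_one: "\<one>\<^bsub>presented_group Xg Rl\<^esub> = pres_class Xg Rl []"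
  by (simp add: presented_group_def)

lemma pres_group: "group (presented_group Xg Rl)"
proof (rule groupI)
  fix x y assume "x \<in> carrier (presented_group Xg Rl)" "y \<in> carrier (presented_group Xg Rl)"
  then obtain u v where "u \<in> lists (Xg \<times> UNIV)" "v \<in> lists (Xg \<times> UNIV)" "x = pres_class Xg Rl u" "y = pres_class Xg Rl v"
    by (auto simp: pres_carrier)
  then show "x \<otimes>\<^bsub>presented_group Xg Rl\<^esub> y \<in> carrier (presented_group Xg Rl)"
    by (simp add: pres_mult pres_carrier)
next
  show "\<one>\<^bsub>presented_group Xg Rl\<^esub> \<in> carrier (presented_group Xg Rl)"
    by (auto simp: pres_carrier pres_one)
next
  fix x y z assume "x \<in> carrier (presented_group Xg Rl)" "y \<in> carrier (presented_group Xg Rl)"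
    "z \<in> carrier (presented_group Xg Rl)"
  then obtain u v w where "u \<in> lists (Xg \<times> UNIV)" "v \<in> lists (Xg \<times> UNIV)" "w \<in> lists (Xg \<times> UNIV)"
     "x = pres_class Xg Rl u" "y = pres_class Xg Rl v" "z = pres_class Xg Rl w"
    by (auto simp: pres_carrier)
  then show "x \<otimes>\<^bsub>presented_group Xg Rl\<^esub> y \<otimes>\<^bsub>presented_group Xg Rl\<^esub> z =
           x \<otimes>\<^bsub>presented_group Xg Rl\<^esub> (y \<otimes>\<^bsub>presented_group Xg Rl\<^esub> z)"
    by (simp add: pres_mult)
next
  fix x assume "x \<in> carrier (presented_group Xg Rl)"
  then obtain u where "u \<in> lists (Xg \<times> UNIV)" "x = pres_class Xg Rl u"
    by (auto simp: pres_carrier)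
  then show "\<one>\<^bsub>presented_group Xg Rl\<^esub> \<otimes>\<^bsub>presented_group Xg Rl\<^esub> x = x"
    using pres_mult[of "[]" Xg u Rl] by (simp add: pres_one)
next
  fix x assume "x \<in> carrier (presented_group Xg Rl)"
  then obtain u where u: "u \<in> lists (Xg \<times> UNIV)" "x = pres_class Xg Rl u"
    by (auto simp: pres_carrier)
  have "pres_class Xg Rl (invw u) \<otimes>\<^bsub>presented_group Xg Rl\<^esub> x = \<one>\<^bsub>presented_group Xg Rl\<^esub>"
    using u pres_mult[of "invw u" Xg u Rl] invw_lists[OF u(1)] pres_rel_invw_left[OF u(1)]
    by (simp add: pres_one pres_class_eq)
  then show "\<exists>y\<in>carrier (presented_group Xg Rl). y \<otimes>\<^bsub>presented_group Xg Rl\<^esub> x = \<one>\<^bsub>presented_group Xg Rl\<^esub>"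
    using invw_lists[OF u(1)] by (auto simp: pres_carrier)
qed

lemma pres_inv:
  assumes "u \<in> lists (Xg \<times> UNIV)"
  shows "inv\<^bsub>presented_group Xg Rl\<^esub> (pres_class Xg Rl u) = pres_class Xg Rl (invw u)"
proof -
  interpret group "presented_group Xg Rl" by (rule pres_group)
  have "pres_class Xg Rl (invw u) \<otimes>\<^bsub>presented_group Xg Rl\<^esub> pres_class Xg Rl u = \<one>\<^bsub>presented_group Xg Rl\<^esub>"
    using assms pres_mult[of "invw u" Xg u Rl] invw_lists[OF assms] pres_rel_invw_left[OF assms]
    by (simp add: pres_one pres_class_eq)
  then show ?thesis
    using assms invw_lists[OF assms] inv_equality by (auto simp: pres_carrier)
qed

lemma pres_gen_carrier: "x \<in> Xg \<Longrightarrow> pres_gen Xg Rl x \<in> carrier (presented_group Xg Rl)"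
  by (auto simp: pres_carrier pres_gen_def)

lemma pres_gen_inv: "x \<in> Xg \<Longrightarrow> inv\<^bsub>presented_group Xg Rl\<^esub> (pres_gen Xg Rl x) = pres_class Xg Rl [(x, False)]"
  by (simp add: pres_gen_def pres_inv)

lemma pres_class_Cons:
  assumes "(x, b) # w \<in> lists (Xg \<times> UNIV)"
  shows "pres_class Xg Rl ((x, b) # w) =
    (if b then pres_gen Xg Rl x else inv\<^bsub>presented_group Xg Rl\<^esub> (pres_gen Xg Rl x))
      \<otimes>\<^bsub>presented_group Xg Rl\<^esub> pres_class Xg Rl w"
  using assms pres_mult[of "[(x,b)]" Xg w Rl] pres_gen_inv[of x Xg Rl]
  by (cases b) (simp_all add: pres_gen_def)

lemma pres_class_eval:
  "w \<in> lists (Xg \<times> UNIV) \<Longrightarrow> pres_class Xg Rl w = eval_word (presented_group Xg Rl) (pres_gen Xg Rl) w"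
proof (induction w)
  case Nil then show ?case by (simp add: eval_word_def pres_one)
next
  case (Cons a w)
  obtain x b where "a = (x, b)" by (cases a)
  with Cons show ?case by (simp add: pres_class_Cons eval_word_def)
qed

lemma pres_induct[consumes 1, case_names one gen]:
  assumes g: "g \<in> carrier (presented_group Xg Rl)"
    and one: "P \<one>\<^bsub>presented_group Xg Rl\<^esub>"
    and step: "\<And>x h. x \<in> Xg \<Longrightarrow> h \<in> carrier (presented_group Xg Rl) \<Longrightarrow> P h \<Longrightarrow>
       P (pres_gen Xg Rl x \<otimes>\<^bsub>presented_group Xg Rl\<^esub> h) \<and>
       P (inv\<^bsub>presented_group Xg Rl\<^esub> (pres_gen Xg Rl x) \<otimes>\<^bsub>presented_group Xg Rl\<^esub> h)"
  shows "P g"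
proof -
  obtain w where w: "w \<in> lists (Xg \<times> UNIV)" "g = pres_class Xg Rl w"
    using g by (auto simp: pres_carrier)
  have "P (pres_class Xg Rl w)" using w(1)
  proof (induction w)
    case Nil then show ?case using one by (simp add: pres_one)
  next
    case (Cons a w)
    obtain x b where a: "a = (x, b)" by (cases a)
    have "pres_class Xg Rl w \<in> carrier (presented_group Xg Rl)" using Cons by (auto simp: pres_carrier)
    with Cons a step[of x "pres_class Xg Rl w"] show ?case
      by (auto simp: pres_class_Cons)
  qed
  then show ?thesis using w by simp
qed

lemma pres_relator: "r \<in> Rl \<Longrightarrow> r \<in> lists (Xg \<times> UNIV) \<Longrightarrow> pres_class Xg Rl r = \<one>\<^bsub>presented_group Xg Rl\<^esub>"
  using pres_rel.pr_rel[of r Rl Xg "[]" "[]"] by (simp add: pres_one pres_class_eq)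



lemma eval_word_Nil[simp]: "eval_word G f [] = \<one>\<^bsub>G\<^esub>"
  by (simp add: eval_word_def)

lemma eval_word_Cons[simp]:
  "eval_word G f ((x, b) # w) = (if b then f x else inv\<^bsub>G\<^esub> (f x)) \<otimes>\<^bsub>G\<^esub> eval_word G f w"
  by (simp add: eval_word_def)

lemma (in group) eval_word_closed:
  "w \<in> lists (Y \<times> UNIV) \<Longrightarrow> f ` Y \<subseteq> carrier G \<Longrightarrow> eval_word G f w \<in> carrier G"
proof (induction w)
  case (Cons a w)
  then show ?case by (cases a) auto
qed simp

lemma (in group) eval_word_append:
  "u \<in> lists (Y \<times> UNIV) \<Longrightarrow> v \<in> lists (Y \<times> UNIV) \<Longrightarrow> f ` Y \<subseteq> carrier G \<Longrightarrow>
   eval_word G f (u @ v) = eval_word G f u \<otimes> eval_word G f v"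
proof (induction u)
  case (Cons a u)
  obtain x b where a: "a = (x, b)" by (cases a)
  have "f x \<in> carrier G" using Cons a by auto
  moreover have "eval_word G f u \<in> carrier G" "eval_word G f v \<in> carrier G"
    using Cons eval_word_closed by auto
  ultimately show ?case using Cons a by (simp add: m_assoc)
next
  case Nil then show ?case using eval_word_closed[of v Y f] by simp
qed

lemma (in group) cancel_aux[simp]:
  "x \<in> carrier G \<Longrightarrow> y \<in> carrier G \<Longrightarrow> x \<otimes> (inv x \<otimes> y) = y"
  "x \<in> carrier G \<Longrightarrow> y \<in> carrier G \<Longrightarrow> inv x \<otimes> (x \<otimes> y) = y"
  by (simp_all add: m_assoc[symmetric])

lemma filter_lists: "w \<in> lists (Y \<times> UNIV) \<Longrightarrow> filter (\<lambda>p. fst p \<in> Y) w = w"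
  by (induction w) auto

lemma filter_in_lists: "filter (\<lambda>p. fst p \<in> Y) w \<in> lists (Y \<times> UNIV)"
  by (induction w) auto

lemma (in group) pres_rel_eval:
  assumes H: "subgroup H G" "\<And>g h. g \<in> carrier G \<Longrightarrow> h \<in> H \<Longrightarrow> g \<otimes> h \<otimes> inv g \<in> H"
    and f: "f ` Xg \<subseteq> carrier G" and R: "Rl \<subseteq> lists (Xg \<times> UNIV)"
    and Rv: "\<And>r. r \<in> Rl \<Longrightarrow> eval_word G f r \<in> H"
    and rel: "pres_rel Xg Rl v w"
  shows "eval_word G f (filter (\<lambda>p. fst p \<in> Xg) v) \<otimes> inv (eval_word G f (filter (\<lambda>p. fst p \<in> Xg) w)) \<in> H"
proof -
  have cl: "\<And>w. eval_word G f (filter (\<lambda>p. fst p \<in> Xg) w) \<in> carrier G"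
    using eval_word_closed[OF filter_in_lists f] .
  show ?thesis using rel
proof (induction rule: pres_rel.induct)
  case (pr_refl w)
  have "eval_word G f (filter (\<lambda>p. fst p \<in> Xg) w) \<in> carrier G"
    using cl .
  then show ?case using subgroup.one_closed[OF H(1)] by simp
next
  case (pr_sym v w)
  let ?a = "eval_word G f (filter (\<lambda>p. fst p \<in> Xg) v)"
  let ?b = "eval_word G f (filter (\<lambda>p. fst p \<in> Xg) w)"
  have ab: "?a \<in> carrier G" "?b \<in> carrier G"
    using cl by auto
  have "inv (?a \<otimes> inv ?b) \<in> H" using pr_sym subgroup.m_inv_closed[OF H(1)] by blast
  then show ?case using ab by (simp add: inv_mult_group)
next
  case (pr_trans u v w)
  let ?a = "eval_word G f (filter (\<lambda>p. fst p \<in> Xg) u)"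
  let ?b = "eval_word G f (filter (\<lambda>p. fst p \<in> Xg) v)"
  let ?c = "eval_word G f (filter (\<lambda>p. fst p \<in> Xg) w)"
  have abc: "?a \<in> carrier G" "?b \<in> carrier G" "?c \<in> carrier G"
    using cl by auto
  have "(?a \<otimes> inv ?b) \<otimes> (?b \<otimes> inv ?c) \<in> H" using pr_trans subgroup.m_closed[OF H(1)] by blast
  also have "(?a \<otimes> inv ?b) \<otimes> (?b \<otimes> inv ?c) = ?a \<otimes> inv ?c"
    using abc by (simp add: m_assoc[symmetric]) (simp add: m_assoc)
  finally show ?case .
next
  case (pr_cancel x u b v)
  let ?u = "filter (\<lambda>p. fst p \<in> Xg) u" and ?v = "filter (\<lambda>p. fst p \<in> Xg) v"
  have l: "?u \<in> lists (Xg \<times> UNIV)" "?v \<in> lists (Xg \<times> UNIV)" "[(x, b), (x, \<not> b)] \<in> lists (Xg \<times> UNIV)"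
    using filter_in_lists pr_cancel by auto
  have fx: "f x \<in> carrier G" using f pr_cancel by auto
  let ?U = "eval_word G f ?u" and ?V = "eval_word G f ?v"
  have UV: "?U \<in> carrier G" "?V \<in> carrier G" using cl by auto
  have e: "eval_word G f ([(x, b), (x, \<not> b)] @ ?v) = ?V"
  proof (cases b)
    case True
    then have "eval_word G f ([(x, b), (x, \<not> b)] @ ?v) = f x \<otimes> (inv (f x) \<otimes> ?V)" by simp
    also have "\<dots> = ?V" using fx UV by (simp add: m_assoc[symmetric])
    finally show ?thesis .
  next
    case False
    then have "eval_word G f ([(x, b), (x, \<not> b)] @ ?v) = inv (f x) \<otimes> (f x \<otimes> ?V)" by simp
    also have "\<dots> = ?V" using fx UV by (simp add: m_assoc[symmetric])
    finally show ?thesis .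
  qed
  have "eval_word G f (filter (\<lambda>p. fst p \<in> Xg) (u @ [(x, b), (x, \<not> b)] @ v)) =
        eval_word G f (?u @ [(x, b), (x, \<not> b)] @ ?v)" using pr_cancel by simp
  also have "\<dots> = ?U \<otimes> ?V"
    using l f e by (simp add: eval_word_append del: append_Cons)
  also have "\<dots> = eval_word G f (filter (\<lambda>p. fst p \<in> Xg) (u @ v))"
    using l f by (simp add: eval_word_append)
  finally have eq: "eval_word G f (filter (\<lambda>p. fst p \<in> Xg) (u @ [(x, b), (x, \<not> b)] @ v)) =
       eval_word G f (filter (\<lambda>p. fst p \<in> Xg) (u @ v))" .
  show ?case
    unfolding eq using cl[of "u @ v"] subgroup.one_closed[OF H(1)] by (simp only: r_inv)
next
  case (pr_rel r u v)
  let ?u = "filter (\<lambda>p. fst p \<in> Xg) u" and ?v = "filter (\<lambda>p. fst p \<in> Xg) v"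
  have rl: "r \<in> lists (Xg \<times> UNIV)" using R pr_rel by auto
  have l: "?u \<in> lists (Xg \<times> UNIV)" "?v \<in> lists (Xg \<times> UNIV)"
    using filter_in_lists by auto
  let ?a = "eval_word G f ?u" and ?b = "eval_word G f ?v" and ?r = "eval_word G f r"
  have c: "?a \<in> carrier G" "?b \<in> carrier G" "?r \<in> carrier G"
    using cl[of u] cl[of v] eval_word_closed[OF rl f] by auto
  have "filter (\<lambda>p. fst p \<in> Xg) (u @ r @ v) = ?u @ r @ ?v" using rl filter_lists by simp
  then have e1: "eval_word G f (filter (\<lambda>p. fst p \<in> Xg) (u @ r @ v)) = ?a \<otimes> ?r \<otimes> ?b"
    using l rl f c by (simp add: eval_word_append m_assoc)
  have e2: "eval_word G f (filter (\<lambda>p. fst p \<in> Xg) (u @ v)) = ?a \<otimes> ?b"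
    using l f by (simp add: eval_word_append)
  have e3: "?a \<otimes> ?r \<otimes> ?b \<otimes> inv (?a \<otimes> ?b) = ?a \<otimes> ?r \<otimes> inv ?a"
    using c by (simp add: inv_mult_group m_assoc)
  have "?a \<otimes> ?r \<otimes> inv ?a \<in> H" using H(2) c Rv pr_rel by blast
  then show ?case unfolding e1 e2 e3 .
qed
qed

definition ind_hom :: "('a, 'b) monoid_scheme \<Rightarrow> ('g \<Rightarrow> 'a) \<Rightarrow> 'g word set \<Rightarrow> 'a" where
  "ind_hom G f A = eval_word G f (SOME w. w \<in> A)"

lemma (in group) ind_hom_val:
  assumes f: "f ` Xg \<subseteq> carrier G" and R: "Rl \<subseteq> lists (Xg \<times> UNIV)"
    and Rv: "\<And>r. r \<in> Rl \<Longrightarrow> eval_word G f r = \<one>"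
    and w: "w \<in> lists (Xg \<times> UNIV)"
  shows "ind_hom G f (pres_class Xg Rl w) = eval_word G f w"
proof -
  let ?a = "SOME a. a \<in> pres_class Xg Rl w"
  have a: "?a \<in> lists (Xg \<times> UNIV)" "pres_rel Xg Rl w ?a" using some_class[OF w] by auto
  have "eval_word G f (filter (\<lambda>p. fst p \<in> Xg) w) \<otimes> inv (eval_word G f (filter (\<lambda>p. fst p \<in> Xg) ?a)) \<in> {\<one>}"
    by (rule pres_rel_eval[OF triv_subgroup _ f R _ a(2)]) (auto simp: Rv)
  moreover have "filter (\<lambda>p. fst p \<in> Xg) w = w" "filter (\<lambda>p. fst p \<in> Xg) ?a = ?a"
    using a w filter_lists by auto
  ultimately have e: "eval_word G f w \<otimes> inv (eval_word G f ?a) = \<one>" by simp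
  have c: "eval_word G f w \<in> carrier G" "eval_word G f ?a \<in> carrier G"
    using eval_word_closed[OF w f] eval_word_closed[OF a(1) f] by auto
  have "inv (inv (eval_word G f ?a)) = eval_word G f w"
    using inv_equality[OF e] c by simp
  then have "eval_word G f w = eval_word G f ?a" using c by simp
  then show ?thesis by (simp add: ind_hom_def)
qed

lemma (in group) ind_hom_hom:
  assumes f: "f ` Xg \<subseteq> carrier G" and R: "Rl \<subseteq> lists (Xg \<times> UNIV)"
    and Rv: "\<And>r. r \<in> Rl \<Longrightarrow> eval_word G f r = \<one>"
  shows "ind_hom G f \<in> hom (presented_group Xg Rl) G"
proof (rule homI)
  fix x assume "x \<in> carrier (presented_group Xg Rl)"
  then obtain u where u: "u \<in> lists (Xg \<times> UNIV)" "x = pres_class Xg Rl u" by (auto simp: pres_carrier)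
  then show "ind_hom G f x \<in> carrier G" using ind_hom_val[OF f R Rv u(1)] eval_word_closed[OF u(1) f] by simp
next
  fix x y assume "x \<in> carrier (presented_group Xg Rl)" "y \<in> carrier (presented_group Xg Rl)"
  then obtain u v where uv: "u \<in> lists (Xg \<times> UNIV)" "v \<in> lists (Xg \<times> UNIV)"
    "x = pres_class Xg Rl u" "y = pres_class Xg Rl v"
    by (auto simp: pres_carrier)
  then show "ind_hom G f (x \<otimes>\<^bsub>presented_group Xg Rl\<^esub> y) = ind_hom G f x \<otimes> ind_hom G f y"
    using ind_hom_val[OF f R Rv uv(1)] ind_hom_val[OF f R Rv uv(2)] ind_hom_val[OF f R Rv, of "u @ v"]
      eval_word_append[OF uv(1,2) f] uv by (simp add: pres_mult)
qed

lemma hom_eval_word: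
  assumes "h \<in> hom G H" "group G" "group H" "w \<in> lists (Y \<times> UNIV)" "f ` Y \<subseteq> carrier G"
  shows "h (eval_word G f w) = eval_word H (h \<circ> f) w"
  using assms(4)
proof (induction w)
  case Nil then show ?case using assms by (simp add: hom_one)
next
  case (Cons a w)
  obtain x b where a: "a = (x, b)" by (cases a)
  have fx: "f x \<in> carrier G" using Cons a assms by auto
  have ew: "eval_word G f w \<in> carrier G" using Cons group.eval_word_closed[OF assms(2) _ assms(5)] by simp
  interpret gh: group_hom G H h using assms by (simp add: group_hom_def group_hom_axioms_def)
  show ?case using Cons a fx ew assms
    by (cases b) (simp_all add: hom_mult gh.hom_inv)
qed



lemma (in group) eval_concat_rep:
  assumes "f s \<in> carrier G" "f t \<in> carrier G"
  shows "eval_word G f (concat (replicate k [(s, True), (t, True)])) = (f s \<otimes> f t) [^] k"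
proof (induction k)
  case 0 then show ?case by simp
next
  case (Suc k)
  have x: "f s \<otimes> f t \<in> carrier G" using assms by simp
  have "eval_word G f (concat (replicate (Suc k) [(s, True), (t, True)])) =
     f s \<otimes> (f t \<otimes> (f s \<otimes> f t) [^] k)" using Suc by simp
  also have "\<dots> = (f s \<otimes> f t) \<otimes> (f s \<otimes> f t) [^] k" using assms by (simp add: m_assoc)
  also have "\<dots> = (f s \<otimes> f t) [^] Suc k" by (simp only: nat_pow_Suc2[OF x])
  finally show ?case .
qed

locale cox =
  fixes S :: "'s set" and m :: "'s \<Rightarrow> 's \<Rightarrow> enat"
  assumes cm: "coxeter_matrix S m"
begin

abbreviation "Wg \<equiv> coxeter_group S m"
abbreviation "Rc \<equiv> coxeter_rels S m"
abbreviation "gg \<equiv> pres_gen S Rc"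
abbreviation "Q \<equiv> coxeter_quandle S m"

lemma finS: "finite S" using cm by (simp add: coxeter_matrix_def)

lemma groupW: "group Wg" unfolding coxeter_group_def by (rule pres_group)

sublocale W: group Wg by (rule groupW)

lemma Rc_lists: "Rc \<subseteq> lists (S \<times> UNIV)"
  unfolding coxeter_rels_def by (fastforce split: if_splits)

lemma carrierW: "carrier Wg = pres_class S Rc ` lists (S \<times> UNIV)"
  by (simp add: coxeter_group_def pres_carrier)

lemma gg_carrier: "s \<in> S \<Longrightarrow> gg s \<in> carrier Wg"
  unfolding coxeter_group_def by (rule pres_gen_carrier)

lemma classW_eval: "u \<in> lists (S \<times> UNIV) \<Longrightarrow> pres_class S Rc u = eval_word Wg gg u"
  unfolding coxeter_group_def by (rule pres_class_eval)

lemma rel_pow: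
  assumes "s \<in> S" "t \<in> S" "m s t = enat k"
  shows "(gg s \<otimes>\<^bsub>Wg\<^esub> gg t) [^]\<^bsub>Wg\<^esub> k = \<one>\<^bsub>Wg\<^esub>"
proof -
  let ?r = "concat (replicate k [(s, True), (t, True)])"
  have r: "?r \<in> Rc" using assms unfolding coxeter_rels_def by blast
  have rl: "?r \<in> lists (S \<times> UNIV)" using r Rc_lists by auto
  have "pres_class S Rc ?r = \<one>\<^bsub>Wg\<^esub>"
    using pres_relator[OF r rl] by (simp add: coxeter_group_def)
  then show ?thesis using classW_eval[OF rl] W.eval_concat_rep[of gg s t k] gg_carrier assms by simp
qed

lemma gg_sq: assumes "s \<in> S" shows "gg s \<otimes>\<^bsub>Wg\<^esub> gg s = \<one>\<^bsub>Wg\<^esub>"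
proof -
  have "m s s = enat 1" using cm assms by (simp add: coxeter_matrix_def one_enat_def)
  from rel_pow[OF assms assms this] show ?thesis using gg_carrier[OF assms] by simp
qed

lemma Q_def': "x \<in> Q \<longleftrightarrow> (\<exists>w s. x = inv\<^bsub>Wg\<^esub> w \<otimes>\<^bsub>Wg\<^esub> gg s \<otimes>\<^bsub>Wg\<^esub> w \<and> w \<in> carrier Wg \<and> s \<in> S)"
  unfolding coxeter_quandle_def by blast

lemma Q_carrier: "x \<in> Q \<Longrightarrow> x \<in> carrier Wg"
  using Q_def' gg_carrier by auto

lemma gg_Q: "s \<in> S \<Longrightarrow> gg s \<in> Q"
  using Q_def'[of "gg s"] gg_carrier by (metis W.inv_one W.l_one W.one_closed W.r_one)

lemma Q_sq: assumes "x \<in> Q" shows "x \<otimes>\<^bsub>Wg\<^esub> x = \<one>\<^bsub>Wg\<^esub>"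
proof -
  obtain w s where ws: "x = inv\<^bsub>Wg\<^esub> w \<otimes>\<^bsub>Wg\<^esub> gg s \<otimes>\<^bsub>Wg\<^esub> w" "w \<in> carrier Wg" "s \<in> S"
    using assms Q_def' by blast
  have gs: "gg s \<in> carrier Wg" using ws gg_carrier by auto
  have "x \<otimes>\<^bsub>Wg\<^esub> x = inv\<^bsub>Wg\<^esub> w \<otimes>\<^bsub>Wg\<^esub> (gg s \<otimes>\<^bsub>Wg\<^esub> gg s) \<otimes>\<^bsub>Wg\<^esub> w"
    using ws gs by (simp add: W.m_assoc)
  also have "\<dots> = \<one>\<^bsub>Wg\<^esub>" using gg_sq ws by simp
  finally show ?thesis .
qed

lemma Q_inv: "x \<in> Q \<Longrightarrow> inv\<^bsub>Wg\<^esub> x = x"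
  using Q_sq Q_carrier W.inv_equality by blast

lemma Q_conj:
  assumes "x \<in> Q" "w \<in> carrier Wg" shows "inv\<^bsub>Wg\<^esub> w \<otimes>\<^bsub>Wg\<^esub> x \<otimes>\<^bsub>Wg\<^esub> w \<in> Q"
proof -
  obtain v s where vs: "x = inv\<^bsub>Wg\<^esub> v \<otimes>\<^bsub>Wg\<^esub> gg s \<otimes>\<^bsub>Wg\<^esub> v" "v \<in> carrier Wg" "s \<in> S"
    using assms Q_def' by blast
  have gs: "gg s \<in> carrier Wg" using vs gg_carrier by auto
  have "inv\<^bsub>Wg\<^esub> w \<otimes>\<^bsub>Wg\<^esub> x \<otimes>\<^bsub>Wg\<^esub> w =
     inv\<^bsub>Wg\<^esub> (v \<otimes>\<^bsub>Wg\<^esub> w) \<otimes>\<^bsub>Wg\<^esub> gg s \<otimes>\<^bsub>Wg\<^esub> (v \<otimes>\<^bsub>Wg\<^esub> w)"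
    using vs gs assms by (simp add: W.m_assoc W.inv_mult_group)
  then show ?thesis using Q_def' vs assms by blast
qed

lemma qop_Q: assumes "x \<in> Q" "y \<in> Q" shows "quandle_op S m x y \<in> Q"
  using Q_conj[OF assms(1) Q_carrier[OF assms(2)]] Q_inv[OF assms(2)]
  by (simp add: quandle_op_def)

lemma Q_sub: "Q \<subseteq> carrier Wg" using Q_carrier by auto

end



context cox begin

abbreviation "Ra \<equiv> adjoint_rels S m"
abbreviation "Ad \<equiv> adjoint_group S m"
abbreviation "ee \<equiv> pres_gen Q Ra"
abbreviation "phi \<equiv> adjoint_phi S m"
abbreviation "qop \<equiv> quandle_op S m"

lemma Ad_def': "Ad = presented_group Q Ra" by (simp add: adjoint_group_def)

lemma groupA: "group Ad" unfolding adjoint_group_def by (rule pres_group)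

sublocale A: group Ad by (rule groupA)

lemma Ra_lists: "Ra \<subseteq> lists (Q \<times> UNIV)"
  unfolding adjoint_rels_def using qop_Q by auto

lemma carrierA: "carrier Ad = pres_class Q Ra ` lists (Q \<times> UNIV)"
  by (simp add: Ad_def' pres_carrier)

lemma ee_carrier: "x \<in> Q \<Longrightarrow> ee x \<in> carrier Ad"
  unfolding Ad_def' by (rule pres_gen_carrier)

lemma classA_eval: "u \<in> lists (Q \<times> UNIV) \<Longrightarrow> pres_class Q Ra u = eval_word Ad ee u"
  unfolding Ad_def' by (rule pres_class_eval)

lemma qop_eq: "x \<in> Q \<Longrightarrow> y \<in> Q \<Longrightarrow> qop x y = y \<otimes>\<^bsub>Wg\<^esub> x \<otimes>\<^bsub>Wg\<^esub> y"
  by (simp add: quandle_op_def)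

lemma Ra_eval: assumes "r \<in> Ra" shows "eval_word Wg (\<lambda>x. x) r = \<one>\<^bsub>Wg\<^esub>"
proof -
  obtain x y where xy: "r = [(y, False), (x, True), (y, True), (qop x y, False)]" "x \<in> Q" "y \<in> Q"
    using assms unfolding adjoint_rels_def by blast
  have c: "x \<in> carrier Wg" "y \<in> carrier Wg" using xy Q_carrier by auto
  have "eval_word Wg (\<lambda>x. x) r = inv\<^bsub>Wg\<^esub> y \<otimes>\<^bsub>Wg\<^esub> (x \<otimes>\<^bsub>Wg\<^esub> (y \<otimes>\<^bsub>Wg\<^esub> inv\<^bsub>Wg\<^esub> (y \<otimes>\<^bsub>Wg\<^esub> x \<otimes>\<^bsub>Wg\<^esub> y)))"
    using xy c by (simp add: qop_eq)
  also have "\<dots> = (y \<otimes>\<^bsub>Wg\<^esub> x \<otimes>\<^bsub>Wg\<^esub> y) \<otimes>\<^bsub>Wg\<^esub> inv\<^bsub>Wg\<^esub> (y \<otimes>\<^bsub>Wg\<^esub> x \<otimes>\<^bsub>Wg\<^esub> y)"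
    using c by (simp only: W.m_assoc Q_inv[OF xy(3)] W.m_closed W.inv_closed)
  also have "\<dots> = \<one>\<^bsub>Wg\<^esub>" using c by simp
  finally show ?thesis .
qed

lemma phi_ind: "phi = ind_hom Wg (\<lambda>x. x)"
  by (simp add: fun_eq_iff adjoint_phi_def ind_hom_def)

lemma phi_hom: "phi \<in> hom Ad Wg"
  unfolding phi_ind Ad_def' using Q_sub Ra_lists Ra_eval by (intro W.ind_hom_hom) auto

lemma phi_val: "w \<in> lists (Q \<times> UNIV) \<Longrightarrow> phi (pres_class Q Ra w) = eval_word Wg (\<lambda>x. x) w"
  unfolding phi_ind using Q_sub Ra_lists Ra_eval by (intro W.ind_hom_val) auto

lemma phi_ee: "x \<in> Q \<Longrightarrow> phi (ee x) = x"
  using phi_val[of "[(x, True)]"] Q_carrier by (simp add: pres_gen_def)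

sublocale phiG: group_hom Ad Wg phi
  using phi_hom by (simp add: group_hom_def group_hom_axioms_def groupA groupW)

lemma phi_carrier: "g \<in> carrier Ad \<Longrightarrow> phi g \<in> carrier Wg"
  using phi_hom by (simp add: hom_in_carrier)

lemma ee_rel: assumes "x \<in> Q" "y \<in> Q"
  shows "inv\<^bsub>Ad\<^esub> ee y \<otimes>\<^bsub>Ad\<^esub> ee x \<otimes>\<^bsub>Ad\<^esub> ee y = ee (qop x y)"
proof -
  let ?r = "[(y, False), (x, True), (y, True), (qop x y, False)]"
  have r: "?r \<in> Ra" using assms unfolding adjoint_rels_def by blast
  have rl: "?r \<in> lists (Q \<times> UNIV)" using r Ra_lists by auto
  have c: "ee x \<in> carrier Ad" "ee y \<in> carrier Ad" "ee (qop x y) \<in> carrier Ad"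
    using assms ee_carrier qop_Q by auto
  have "pres_class Q Ra ?r = \<one>\<^bsub>Ad\<^esub>"
    using pres_relator[OF r rl] by (simp add: Ad_def')
  then have "inv\<^bsub>Ad\<^esub> ee y \<otimes>\<^bsub>Ad\<^esub> (ee x \<otimes>\<^bsub>Ad\<^esub> (ee y \<otimes>\<^bsub>Ad\<^esub> inv\<^bsub>Ad\<^esub> ee (qop x y))) = \<one>\<^bsub>Ad\<^esub>"
    using classA_eval[OF rl] c by simp
  then have "(inv\<^bsub>Ad\<^esub> ee y \<otimes>\<^bsub>Ad\<^esub> ee x \<otimes>\<^bsub>Ad\<^esub> ee y) \<otimes>\<^bsub>Ad\<^esub> inv\<^bsub>Ad\<^esub> ee (qop x y) = \<one>\<^bsub>Ad\<^esub>"
    using c by (simp add: A.m_assoc)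
  then show ?thesis using c A.inv_equality
    by (metis A.inv_closed A.inv_inv A.m_closed)
qed

lemma qop_qop: assumes "x \<in> Q" "y \<in> Q" shows "qop (qop x y) y = x"
proof -
  have c: "x \<in> carrier Wg" "y \<in> carrier Wg" using assms Q_carrier by auto
  have "qop (qop x y) y = (y \<otimes>\<^bsub>Wg\<^esub> y) \<otimes>\<^bsub>Wg\<^esub> x \<otimes>\<^bsub>Wg\<^esub> (y \<otimes>\<^bsub>Wg\<^esub> y)"
    unfolding qop_eq[OF qop_Q[OF assms] assms(2)] unfolding qop_eq[OF assms] using c by (simp add: W.m_assoc)
  then show ?thesis using Q_sq[OF assms(2)] c by simp
qed

lemma ee_rel2: assumes "x \<in> Q" "y \<in> Q"
  shows "ee y \<otimes>\<^bsub>Ad\<^esub> ee x \<otimes>\<^bsub>Ad\<^esub> inv\<^bsub>Ad\<^esub> ee y = ee (qop x y)"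
proof -
  have q: "qop x y \<in> Q" using assms qop_Q by auto
  have c: "ee x \<in> carrier Ad" "ee y \<in> carrier Ad" "ee (qop x y) \<in> carrier Ad"
    using assms ee_carrier q by auto
  have "inv\<^bsub>Ad\<^esub> ee y \<otimes>\<^bsub>Ad\<^esub> ee (qop x y) \<otimes>\<^bsub>Ad\<^esub> ee y = ee x"
    using ee_rel[OF q assms(2)] qop_qop[OF assms] by simp
  then have "ee y \<otimes>\<^bsub>Ad\<^esub> (inv\<^bsub>Ad\<^esub> ee y \<otimes>\<^bsub>Ad\<^esub> ee (qop x y) \<otimes>\<^bsub>Ad\<^esub> ee y) \<otimes>\<^bsub>Ad\<^esub> inv\<^bsub>Ad\<^esub> ee y
     = ee y \<otimes>\<^bsub>Ad\<^esub> ee x \<otimes>\<^bsub>Ad\<^esub> inv\<^bsub>Ad\<^esub> ee y" by simp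
  moreover have "ee y \<otimes>\<^bsub>Ad\<^esub> (inv\<^bsub>Ad\<^esub> ee y \<otimes>\<^bsub>Ad\<^esub> ee (qop x y) \<otimes>\<^bsub>Ad\<^esub> ee y) \<otimes>\<^bsub>Ad\<^esub> inv\<^bsub>Ad\<^esub> ee y
     = ee (qop x y)" using c by (simp add: A.m_assoc)
  ultimately show ?thesis by simp
qed

lemma conj_lemma:
  assumes g: "g \<in> carrier Ad"
  shows "\<forall>y\<in>Q. inv\<^bsub>Ad\<^esub> g \<otimes>\<^bsub>Ad\<^esub> ee y \<otimes>\<^bsub>Ad\<^esub> g = ee (inv\<^bsub>Wg\<^esub> (phi g) \<otimes>\<^bsub>Wg\<^esub> y \<otimes>\<^bsub>Wg\<^esub> phi g)"
  using g unfolding Ad_def'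
proof (induction rule: pres_induct)
  case one
  show ?case using ee_carrier Q_carrier unfolding Ad_def'[symmetric] by simp
next
  case (gen x h)
  note h = gen(2)[folded Ad_def']
  note IH = gen(3)[folded Ad_def']
  have ex: "ee x \<in> carrier Ad" using gen ee_carrier by auto
  have px: "phi (ee x) = x" using phi_ee gen by auto
  have xc: "x \<in> carrier Wg" using gen Q_carrier by auto
  have ph: "phi h \<in> carrier Wg" using phi_carrier h by auto
  have A1: "inv\<^bsub>Ad\<^esub> (ee x \<otimes>\<^bsub>Ad\<^esub> h) \<otimes>\<^bsub>Ad\<^esub> ee y \<otimes>\<^bsub>Ad\<^esub> (ee x \<otimes>\<^bsub>Ad\<^esub> h) =
         ee (inv\<^bsub>Wg\<^esub> (phi (ee x \<otimes>\<^bsub>Ad\<^esub> h)) \<otimes>\<^bsub>Wg\<^esub> y \<otimes>\<^bsub>Wg\<^esub> phi (ee x \<otimes>\<^bsub>Ad\<^esub> h))" if y: "y \<in> Q" for y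
  proof -
    have ey: "ee y \<in> carrier Ad" using y ee_carrier by auto
    have yc: "y \<in> carrier Wg" using y Q_carrier by auto
    have "inv\<^bsub>Ad\<^esub> (ee x \<otimes>\<^bsub>Ad\<^esub> h) \<otimes>\<^bsub>Ad\<^esub> ee y \<otimes>\<^bsub>Ad\<^esub> (ee x \<otimes>\<^bsub>Ad\<^esub> h) =
       inv\<^bsub>Ad\<^esub> h \<otimes>\<^bsub>Ad\<^esub> (inv\<^bsub>Ad\<^esub> ee x \<otimes>\<^bsub>Ad\<^esub> ee y \<otimes>\<^bsub>Ad\<^esub> ee x) \<otimes>\<^bsub>Ad\<^esub> h"
      using ex ey h by (simp add: A.m_assoc A.inv_mult_group)
    also have "\<dots> = inv\<^bsub>Ad\<^esub> h \<otimes>\<^bsub>Ad\<^esub> ee (qop y x) \<otimes>\<^bsub>Ad\<^esub> h" using ee_rel y gen by simp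
    also have "\<dots> = ee (inv\<^bsub>Wg\<^esub> (phi h) \<otimes>\<^bsub>Wg\<^esub> qop y x \<otimes>\<^bsub>Wg\<^esub> phi h)"
      using IH qop_Q y gen by simp
    also have "inv\<^bsub>Wg\<^esub> (phi h) \<otimes>\<^bsub>Wg\<^esub> qop y x \<otimes>\<^bsub>Wg\<^esub> phi h =
        inv\<^bsub>Wg\<^esub> (phi (ee x \<otimes>\<^bsub>Ad\<^esub> h)) \<otimes>\<^bsub>Wg\<^esub> y \<otimes>\<^bsub>Wg\<^esub> phi (ee x \<otimes>\<^bsub>Ad\<^esub> h)"
      using ex h px xc yc ph y gen Q_inv[of x]
      by (simp add: qop_eq W.m_assoc W.inv_mult_group)
    finally show ?thesis .
  qed
  have A2: "inv\<^bsub>Ad\<^esub> (inv\<^bsub>Ad\<^esub> ee x \<otimes>\<^bsub>Ad\<^esub> h) \<otimes>\<^bsub>Ad\<^esub> ee y \<otimes>\<^bsub>Ad\<^esub> (inv\<^bsub>Ad\<^esub> ee x \<otimes>\<^bsub>Ad\<^esub> h) =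
         ee (inv\<^bsub>Wg\<^esub> (phi (inv\<^bsub>Ad\<^esub> ee x \<otimes>\<^bsub>Ad\<^esub> h)) \<otimes>\<^bsub>Wg\<^esub> y \<otimes>\<^bsub>Wg\<^esub> phi (inv\<^bsub>Ad\<^esub> ee x \<otimes>\<^bsub>Ad\<^esub> h))" if y: "y \<in> Q" for y
  proof -
    have ey: "ee y \<in> carrier Ad" using y ee_carrier by auto
    have yc: "y \<in> carrier Wg" using y Q_carrier by auto
    have "inv\<^bsub>Ad\<^esub> (inv\<^bsub>Ad\<^esub> ee x \<otimes>\<^bsub>Ad\<^esub> h) \<otimes>\<^bsub>Ad\<^esub> ee y \<otimes>\<^bsub>Ad\<^esub> (inv\<^bsub>Ad\<^esub> ee x \<otimes>\<^bsub>Ad\<^esub> h) =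
       inv\<^bsub>Ad\<^esub> h \<otimes>\<^bsub>Ad\<^esub> (ee x \<otimes>\<^bsub>Ad\<^esub> ee y \<otimes>\<^bsub>Ad\<^esub> inv\<^bsub>Ad\<^esub> ee x) \<otimes>\<^bsub>Ad\<^esub> h"
      using ex ey h by (simp add: A.m_assoc A.inv_mult_group)
    also have "\<dots> = inv\<^bsub>Ad\<^esub> h \<otimes>\<^bsub>Ad\<^esub> ee (qop y x) \<otimes>\<^bsub>Ad\<^esub> h" using ee_rel2 y gen by simp
    also have "\<dots> = ee (inv\<^bsub>Wg\<^esub> (phi h) \<otimes>\<^bsub>Wg\<^esub> qop y x \<otimes>\<^bsub>Wg\<^esub> phi h)"
      using IH qop_Q y gen by simp
    also have "inv\<^bsub>Wg\<^esub> (phi h) \<otimes>\<^bsub>Wg\<^esub> qop y x \<otimes>\<^bsub>Wg\<^esub> phi h =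
        inv\<^bsub>Wg\<^esub> (phi (inv\<^bsub>Ad\<^esub> ee x \<otimes>\<^bsub>Ad\<^esub> h)) \<otimes>\<^bsub>Wg\<^esub> y \<otimes>\<^bsub>Wg\<^esub> phi (inv\<^bsub>Ad\<^esub> ee x \<otimes>\<^bsub>Ad\<^esub> h)"
      using ex h px xc yc ph y gen Q_inv[of x]
      by (simp add: qop_eq W.m_assoc W.inv_mult_group)
    finally show ?thesis .
  qed
  show ?case unfolding Ad_def'[symmetric] using A1 A2 by blast
qed

end



lemma (in group) comm_inv:
  assumes "a \<in> carrier G" "b \<in> carrier G" "a \<otimes> b = b \<otimes> a"
  shows "inv a \<otimes> b = b \<otimes> inv a"
proof -
  have "b \<otimes> inv a = inv a \<otimes> (a \<otimes> b) \<otimes> inv a" using assms(1,2) by (simp add: m_assoc)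
  also have "\<dots> = inv a \<otimes> (b \<otimes> a) \<otimes> inv a" using assms(3) by simp
  also have "\<dots> = inv a \<otimes> b" using assms(1,2) by (simp add: m_assoc)
  finally show ?thesis by (rule sym)
qed

fun alt :: "('a \<Rightarrow> 'a \<Rightarrow> 'a) \<Rightarrow> 'a \<Rightarrow> 'a \<Rightarrow> nat \<Rightarrow> 'a" where
  "alt q a b 0 = a"
| "alt q a b (Suc 0) = q b a"
| "alt q a b (Suc (Suc i)) = q (q (alt q a b i) b) a"

context cox begin

lemma ker_central:
  assumes g: "g \<in> carrier Ad" and pg: "phi g = \<one>\<^bsub>Wg\<^esub>" and h: "h \<in> carrier Ad"
  shows "g \<otimes>\<^bsub>Ad\<^esub> h = h \<otimes>\<^bsub>Ad\<^esub> g"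
proof -
  have gen: "g \<otimes>\<^bsub>Ad\<^esub> ee y = ee y \<otimes>\<^bsub>Ad\<^esub> g" if y: "y \<in> Q" for y
  proof -
    have ey: "ee y \<in> carrier Ad" using y ee_carrier by auto
    have "inv\<^bsub>Ad\<^esub> g \<otimes>\<^bsub>Ad\<^esub> ee y \<otimes>\<^bsub>Ad\<^esub> g = ee y"
      using conj_lemma[OF g] y pg Q_carrier by simp
    then have "g \<otimes>\<^bsub>Ad\<^esub> (inv\<^bsub>Ad\<^esub> g \<otimes>\<^bsub>Ad\<^esub> ee y \<otimes>\<^bsub>Ad\<^esub> g) = g \<otimes>\<^bsub>Ad\<^esub> ee y" by simp
    then show ?thesis using g ey by (simp add: A.m_assoc)
  qed
  show ?thesis using h unfolding Ad_def'
  proof (induction rule: pres_induct)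
    case one then show ?case using g by (simp add: Ad_def'[symmetric])
  next
    case (gen x h)
    note h = gen(2)[folded Ad_def'] and IH = gen(3)[folded Ad_def']
    have ex: "ee x \<in> carrier Ad" using gen ee_carrier by auto
    have c1: "g \<otimes>\<^bsub>Ad\<^esub> (ee x \<otimes>\<^bsub>Ad\<^esub> h) = ee x \<otimes>\<^bsub>Ad\<^esub> h \<otimes>\<^bsub>Ad\<^esub> g"
    proof -
      have "g \<otimes>\<^bsub>Ad\<^esub> (ee x \<otimes>\<^bsub>Ad\<^esub> h) = (g \<otimes>\<^bsub>Ad\<^esub> ee x) \<otimes>\<^bsub>Ad\<^esub> h" using g ex h by (simp add: A.m_assoc)
      also have "\<dots> = ee x \<otimes>\<^bsub>Ad\<^esub> (g \<otimes>\<^bsub>Ad\<^esub> h)" using g ex h gen.hyps(1) \<open>\<And>y. y \<in> Q \<Longrightarrow> _\<close> by (simp add: A.m_assoc)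
      also have "\<dots> = ee x \<otimes>\<^bsub>Ad\<^esub> h \<otimes>\<^bsub>Ad\<^esub> g" using IH g ex h by (simp add: A.m_assoc)
      finally show ?thesis .
    qed
    have gi: "g \<otimes>\<^bsub>Ad\<^esub> inv\<^bsub>Ad\<^esub> ee x = inv\<^bsub>Ad\<^esub> ee x \<otimes>\<^bsub>Ad\<^esub> g"
      using A.comm_inv[OF ex g] \<open>\<And>y. y \<in> Q \<Longrightarrow> _\<close>[OF gen.hyps(1)] by simp
    have c2: "g \<otimes>\<^bsub>Ad\<^esub> (inv\<^bsub>Ad\<^esub> ee x \<otimes>\<^bsub>Ad\<^esub> h) = inv\<^bsub>Ad\<^esub> ee x \<otimes>\<^bsub>Ad\<^esub> h \<otimes>\<^bsub>Ad\<^esub> g"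
    proof -
      have "g \<otimes>\<^bsub>Ad\<^esub> (inv\<^bsub>Ad\<^esub> ee x \<otimes>\<^bsub>Ad\<^esub> h) = (g \<otimes>\<^bsub>Ad\<^esub> inv\<^bsub>Ad\<^esub> ee x) \<otimes>\<^bsub>Ad\<^esub> h" using g ex h by (simp add: A.m_assoc)
      also have "\<dots> = inv\<^bsub>Ad\<^esub> ee x \<otimes>\<^bsub>Ad\<^esub> (g \<otimes>\<^bsub>Ad\<^esub> h)" using gi g ex h by (simp add: A.m_assoc)
      also have "\<dots> = inv\<^bsub>Ad\<^esub> ee x \<otimes>\<^bsub>Ad\<^esub> h \<otimes>\<^bsub>Ad\<^esub> g" using IH g ex h by (simp add: A.m_assoc)
      finally show ?thesis .
    qed
    show ?case using c1 c2 by (simp add: Ad_def'[symmetric])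
  qed
qed

definition zz :: "'s word set \<Rightarrow> 's word set word set" where
  "zz x = ee x \<otimes>\<^bsub>Ad\<^esub> ee x"

lemma zz_carrier: "x \<in> Q \<Longrightarrow> zz x \<in> carrier Ad"
  by (simp add: zz_def ee_carrier)

lemma zz_central: "x \<in> Q \<Longrightarrow> h \<in> carrier Ad \<Longrightarrow> zz x \<otimes>\<^bsub>Ad\<^esub> h = h \<otimes>\<^bsub>Ad\<^esub> zz x"
  using ker_central[OF zz_carrier] phi_ee Q_sq ee_carrier
  by (simp add: zz_def)

lemma alt_Q: "a \<in> Q \<Longrightarrow> b \<in> Q \<Longrightarrow> alt qop a b i \<in> Q"
  by (induction qop a b i rule: alt.induct) (auto intro: qop_Q)

lemma braid:
  assumes G: "group G" and fc: "\<And>x. x \<in> Q \<Longrightarrow> f x \<in> carrier G"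
    and fsq: "\<And>x. x \<in> Q \<Longrightarrow> f x \<otimes>\<^bsub>G\<^esub> f x = \<one>\<^bsub>G\<^esub>"
    and fq: "\<And>x y. x \<in> Q \<Longrightarrow> y \<in> Q \<Longrightarrow> f (qop x y) = f y \<otimes>\<^bsub>G\<^esub> f x \<otimes>\<^bsub>G\<^esub> f y"
    and st: "s \<in> S" "t \<in> S" "m s t = enat k"
  shows "(f (gg s) \<otimes>\<^bsub>G\<^esub> f (gg t)) [^]\<^bsub>G\<^esub> k = \<one>\<^bsub>G\<^esub>"
proof -
  interpret G: group G by (rule G)
  define a where "a = gg s"
  define b where "b = gg t"
  have aQ: "a \<in> Q" and bQ: "b \<in> Q" using st gg_Q a_def b_def by auto
  define r where "r = alt qop a b"
  have rQ: "\<And>i. r i \<in> Q" using alt_Q aQ bQ r_def by auto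
  define \<omega> where "\<omega> = a \<otimes>\<^bsub>Wg\<^esub> b"
  have ac: "a \<in> carrier Wg" "b \<in> carrier Wg" using aQ bQ Q_carrier by auto
  have wc: "\<omega> \<in> carrier Wg" using ac \<omega>_def by simp
  have rW: "r i = \<omega> [^]\<^bsub>Wg\<^esub> i \<otimes>\<^bsub>Wg\<^esub> a" for i
  proof (induction i rule: nat_less_induct)
    case (1 n)
    show ?case
    proof (cases n)
      case 0 then show ?thesis using ac by (simp add: r_def)
    next
      case (Suc n1)
      show ?thesis
      proof (cases n1)
        case 0
        then show ?thesis using Suc ac aQ bQ by (simp add: r_def qop_eq \<omega>_def W.m_assoc)
      next
        case (Suc i)
        have IH: "r i = \<omega> [^]\<^bsub>Wg\<^esub> i \<otimes>\<^bsub>Wg\<^esub> a" using 1 Suc \<open>n = Suc n1\<close> by auto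
        have pc: "\<omega> [^]\<^bsub>Wg\<^esub> i \<in> carrier Wg" using wc by simp
        have "r n = qop (qop (r i) b) a" using Suc \<open>n = Suc n1\<close> by (simp add: r_def)
        also have "\<dots> = a \<otimes>\<^bsub>Wg\<^esub> qop (r i) b \<otimes>\<^bsub>Wg\<^esub> a"
          by (rule qop_eq[OF qop_Q[OF rQ bQ] aQ])
        also have "\<dots> = a \<otimes>\<^bsub>Wg\<^esub> (b \<otimes>\<^bsub>Wg\<^esub> r i \<otimes>\<^bsub>Wg\<^esub> b) \<otimes>\<^bsub>Wg\<^esub> a"
          by (simp only: qop_eq[OF rQ bQ])
        also have "\<dots> = \<omega> \<otimes>\<^bsub>Wg\<^esub> \<omega> [^]\<^bsub>Wg\<^esub> i \<otimes>\<^bsub>Wg\<^esub> \<omega> \<otimes>\<^bsub>Wg\<^esub> a"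
          using IH ac pc by (simp add: \<omega>_def W.m_assoc)
        also have "\<omega> \<otimes>\<^bsub>Wg\<^esub> \<omega> [^]\<^bsub>Wg\<^esub> i \<otimes>\<^bsub>Wg\<^esub> \<omega> = \<omega> [^]\<^bsub>Wg\<^esub> n"
        proof -
          have "\<omega> [^]\<^bsub>Wg\<^esub> n = \<omega> \<otimes>\<^bsub>Wg\<^esub> \<omega> [^]\<^bsub>Wg\<^esub> (Suc i)"
            using Suc \<open>n = Suc n1\<close> by (simp only: W.nat_pow_Suc2[OF wc])
          also have "\<dots> = \<omega> \<otimes>\<^bsub>Wg\<^esub> (\<omega> [^]\<^bsub>Wg\<^esub> i \<otimes>\<^bsub>Wg\<^esub> \<omega>)" by (simp only: nat_pow_Suc)
          finally show ?thesis using wc pc by (simp add: W.m_assoc)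
        qed
        finally show ?thesis .
      qed
    qed
  qed
  have fa: "f a \<in> carrier G" and fb: "f b \<in> carrier G" using fc aQ bQ by auto
  define c where "c = f a \<otimes>\<^bsub>G\<^esub> f b"
  have cc: "c \<in> carrier G" using fa fb c_def by simp
  have fr: "f (r (Suc (Suc i))) = c \<otimes>\<^bsub>G\<^esub> f (r i) \<otimes>\<^bsub>G\<^esub> (f b \<otimes>\<^bsub>G\<^esub> f a)" for i
  proof -
    have "f (r (Suc (Suc i))) = f a \<otimes>\<^bsub>G\<^esub> (f b \<otimes>\<^bsub>G\<^esub> f (r i) \<otimes>\<^bsub>G\<^esub> f b) \<otimes>\<^bsub>G\<^esub> f a"
      using rQ[of i] aQ bQ qop_Q[OF rQ[of i] bQ]
      by (simp add: r_def fq)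
    then show ?thesis using fa fb fc[OF rQ[of i]] by (simp add: c_def G.m_assoc)
  qed
  have cinv: "c \<otimes>\<^bsub>G\<^esub> (f b \<otimes>\<^bsub>G\<^esub> f a) = \<one>\<^bsub>G\<^esub>"
  proof -
    have "c \<otimes>\<^bsub>G\<^esub> (f b \<otimes>\<^bsub>G\<^esub> f a) = f a \<otimes>\<^bsub>G\<^esub> (f b \<otimes>\<^bsub>G\<^esub> f b) \<otimes>\<^bsub>G\<^esub> f a"
      using fa fb by (simp add: c_def G.m_assoc)
    then show ?thesis using fsq aQ bQ fa by simp
  qed
  have P: "f (r (Suc i)) \<otimes>\<^bsub>G\<^esub> f (r i) = c \<and> f (r (Suc (Suc i))) \<otimes>\<^bsub>G\<^esub> f (r (Suc i)) = c" for i
  proof (induction i)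
    case 0
    have r1: "f (r (Suc 0)) = f a \<otimes>\<^bsub>G\<^esub> f b \<otimes>\<^bsub>G\<^esub> f a" using aQ bQ by (simp add: r_def fq)
    have p0: "f (r (Suc 0)) \<otimes>\<^bsub>G\<^esub> f (r 0) = c"
    proof -
      have "f (r (Suc 0)) \<otimes>\<^bsub>G\<^esub> f (r 0) = c \<otimes>\<^bsub>G\<^esub> (f a \<otimes>\<^bsub>G\<^esub> f a)"
        using r1 fa fb by (simp add: r_def c_def G.m_assoc)
      then show ?thesis using fsq aQ cc by simp
    qed
    have "f (r (Suc (Suc 0))) \<otimes>\<^bsub>G\<^esub> f (r (Suc 0)) = c \<otimes>\<^bsub>G\<^esub> f a \<otimes>\<^bsub>G\<^esub> (f b \<otimes>\<^bsub>G\<^esub> f a) \<otimes>\<^bsub>G\<^esub> (f a \<otimes>\<^bsub>G\<^esub> f b \<otimes>\<^bsub>G\<^esub> f a)"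
      using fr[of 0] r1 by (simp add: r_def)
    also have "\<dots> = c \<otimes>\<^bsub>G\<^esub> f a \<otimes>\<^bsub>G\<^esub> f b \<otimes>\<^bsub>G\<^esub> (f a \<otimes>\<^bsub>G\<^esub> f a) \<otimes>\<^bsub>G\<^esub> f b \<otimes>\<^bsub>G\<^esub> f a"
      using fa fb cc by (simp add: G.m_assoc)
    also have "\<dots> = c \<otimes>\<^bsub>G\<^esub> f a \<otimes>\<^bsub>G\<^esub> (f b \<otimes>\<^bsub>G\<^esub> f b) \<otimes>\<^bsub>G\<^esub> f a"
      using fa fb cc fsq aQ by (simp add: G.m_assoc)
    also have "\<dots> = c \<otimes>\<^bsub>G\<^esub> (f a \<otimes>\<^bsub>G\<^esub> f a)"
      using fa fb cc fsq bQ by (simp add: G.m_assoc)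
    also have "\<dots> = c" using fsq aQ cc by simp
    finally show ?case using p0 by simp
  next
    case (Suc i)
    have "f (r (Suc (Suc (Suc i)))) \<otimes>\<^bsub>G\<^esub> f (r (Suc (Suc i))) =
       c \<otimes>\<^bsub>G\<^esub> f (r (Suc i)) \<otimes>\<^bsub>G\<^esub> ((f b \<otimes>\<^bsub>G\<^esub> f a) \<otimes>\<^bsub>G\<^esub> c) \<otimes>\<^bsub>G\<^esub> f (r i) \<otimes>\<^bsub>G\<^esub> (f b \<otimes>\<^bsub>G\<^esub> f a)"
      using fr[of i] fr[of "Suc i"] fa fb cc fc[OF rQ[of i]] fc[OF rQ[of "Suc i"]]
      by (simp add: G.m_assoc)
    also have "(f b \<otimes>\<^bsub>G\<^esub> f a) \<otimes>\<^bsub>G\<^esub> c = \<one>\<^bsub>G\<^esub>"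
      using cinv G.inv_comm fa fb cc by (metis G.m_closed)
    also have "c \<otimes>\<^bsub>G\<^esub> f (r (Suc i)) \<otimes>\<^bsub>G\<^esub> \<one>\<^bsub>G\<^esub> \<otimes>\<^bsub>G\<^esub> f (r i) \<otimes>\<^bsub>G\<^esub> (f b \<otimes>\<^bsub>G\<^esub> f a)
        = c \<otimes>\<^bsub>G\<^esub> (f (r (Suc i)) \<otimes>\<^bsub>G\<^esub> f (r i)) \<otimes>\<^bsub>G\<^esub> (f b \<otimes>\<^bsub>G\<^esub> f a)"
      using fa fb cc fc[OF rQ[of i]] fc[OF rQ[of "Suc i"]] by (simp add: G.m_assoc)
    also have "\<dots> = c" using Suc cinv cc fa fb by (simp add: G.m_assoc)
    finally show ?case using Suc by simp
  qed
  have pw: "c [^]\<^bsub>G\<^esub> n = f (r n) \<otimes>\<^bsub>G\<^esub> f a" for n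
  proof (induction n)
    case 0 then show ?case using fsq aQ by (simp add: r_def)
  next
    case (Suc n)
    have "c [^]\<^bsub>G\<^esub> Suc n = c \<otimes>\<^bsub>G\<^esub> c [^]\<^bsub>G\<^esub> n" using cc by (simp only: G.nat_pow_Suc2)
    also have "\<dots> = f (r (Suc n)) \<otimes>\<^bsub>G\<^esub> (f (r n) \<otimes>\<^bsub>G\<^esub> f (r n)) \<otimes>\<^bsub>G\<^esub> f a"
      using Suc P[of n, THEN conjunct1, symmetric] fa fc[OF rQ[of n]] fc[OF rQ[of "Suc n"]] by (simp add: G.m_assoc)
    also have "\<dots> = f (r (Suc n)) \<otimes>\<^bsub>G\<^esub> f a" using fsq rQ fc by simp
    finally show ?case .
  qed
  have "\<omega> [^]\<^bsub>Wg\<^esub> k = \<one>\<^bsub>Wg\<^esub>" using rel_pow[OF st] a_def b_def \<omega>_def by simp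
  then have "r k = a" using rW[of k] ac by simp
  then show ?thesis using pw[of k] fsq aQ a_def b_def c_def by simp
qed

end



lemma (in group) central_nat_pow:
  assumes z: "z \<in> carrier G" and c: "\<And>h. h \<in> carrier G \<Longrightarrow> z \<otimes> h = h \<otimes> z" and h: "h \<in> carrier G"
  shows "z [^] (n::nat) \<otimes> h = h \<otimes> z [^] n"
proof (induction n)
  case 0 then show ?case using h by simp
next
  case (Suc n)
  have "z [^] Suc n \<otimes> h = z [^] n \<otimes> (z \<otimes> h)" using z h by (simp add: m_assoc)
  also have "\<dots> = z [^] n \<otimes> (h \<otimes> z)" using c[OF h] by simp
  also have "\<dots> = (z [^] n \<otimes> h) \<otimes> z" using z h by (simp add: m_assoc)
  also have "\<dots> = h \<otimes> z [^] Suc n" using Suc z h by (simp add: m_assoc)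
  finally show ?case .
qed

lemma (in group) central_int_pow:
  assumes z: "z \<in> carrier G" and c: "\<And>h. h \<in> carrier G \<Longrightarrow> z \<otimes> h = h \<otimes> z" and h: "h \<in> carrier G"
  shows "z [^] (k::int) \<otimes> h = h \<otimes> z [^] k"
proof (cases "k < 0")
  case True
  then have e: "z [^] k = inv (z [^] nat (-k))" by (subst int_pow_def2) simp
  have "inv (z [^] nat (-k)) \<otimes> h = h \<otimes> inv (z [^] nat (-k))"
    by (rule comm_inv) (simp_all add: z h central_nat_pow[OF z c h])
  then show ?thesis by (simp only: e)
next
  case False
  then have e: "z [^] k = z [^] nat k" by (subst int_pow_def2) simp
  show ?thesis unfolding e by (rule central_nat_pow[OF z c h])
qed

lemma eval_word_map:
  "eval_word G f (map (\<lambda>(s, b). (h s, b)) u) = eval_word G (f \<circ> h) u"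
  by (induction u) (auto simp: eval_word_def)

context cox begin

definition conjW :: "'s word set \<Rightarrow> 's word set \<Rightarrow> bool" where
  "conjW x y \<longleftrightarrow> x \<in> Q \<and> y \<in> Q \<and> (\<exists>w\<in>carrier Wg. y = inv\<^bsub>Wg\<^esub> w \<otimes>\<^bsub>Wg\<^esub> x \<otimes>\<^bsub>Wg\<^esub> w)"

lemma conjW_refl: "x \<in> Q \<Longrightarrow> conjW x x"
  unfolding conjW_def using Q_carrier by (metis W.inv_one W.l_one W.one_closed W.r_one)

lemma conjW_sym: assumes "conjW x y" shows "conjW y x"
proof -
  obtain w where w: "w \<in> carrier Wg" "y = inv\<^bsub>Wg\<^esub> w \<otimes>\<^bsub>Wg\<^esub> x \<otimes>\<^bsub>Wg\<^esub> w" "x \<in> Q" "y \<in> Q"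
    using assms conjW_def by auto
  have xc: "x \<in> carrier Wg" using w Q_carrier by auto
  have "inv\<^bsub>Wg\<^esub> (inv\<^bsub>Wg\<^esub> w) \<otimes>\<^bsub>Wg\<^esub> y \<otimes>\<^bsub>Wg\<^esub> inv\<^bsub>Wg\<^esub> w = x"
    using w xc by (simp add: W.m_assoc)
  then show ?thesis using w unfolding conjW_def by (metis W.inv_closed)
qed

lemma conjW_trans: assumes "conjW x y" "conjW y z" shows "conjW x z"
proof -
  obtain w where w: "w \<in> carrier Wg" "y = inv\<^bsub>Wg\<^esub> w \<otimes>\<^bsub>Wg\<^esub> x \<otimes>\<^bsub>Wg\<^esub> w" "x \<in> Q" "y \<in> Q"
    using assms conjW_def by auto
  obtain v where v: "v \<in> carrier Wg" "z = inv\<^bsub>Wg\<^esub> v \<otimes>\<^bsub>Wg\<^esub> y \<otimes>\<^bsub>Wg\<^esub> v" "z \<in> Q"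
    using assms conjW_def by auto
  have xc: "x \<in> carrier Wg" using w Q_carrier by auto
  have "z = inv\<^bsub>Wg\<^esub> (w \<otimes>\<^bsub>Wg\<^esub> v) \<otimes>\<^bsub>Wg\<^esub> x \<otimes>\<^bsub>Wg\<^esub> (w \<otimes>\<^bsub>Wg\<^esub> v)"
    using w v xc by (simp add: W.m_assoc W.inv_mult_group)
  then show ?thesis using w v unfolding conjW_def by (metis W.m_closed)
qed

lemma conjW_qop: assumes "x \<in> Q" "y \<in> Q" shows "conjW x (qop x y)"
  unfolding conjW_def using assms qop_Q Q_carrier Q_inv[OF assms(2)]
  by (metis qop_eq)

lemma Q_gen_conj: assumes "x \<in> Q" shows "\<exists>s\<in>S. conjW (gg s) x"
proof -
  obtain w s where ws: "x = inv\<^bsub>Wg\<^esub> w \<otimes>\<^bsub>Wg\<^esub> gg s \<otimes>\<^bsub>Wg\<^esub> w" "w \<in> carrier Wg" "s \<in> S"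
    using assms Q_def' by blast
  then show ?thesis unfolding conjW_def using gg_Q assms by blast
qed

definition rep :: "'s word set \<Rightarrow> 's word set" where
  "rep x = (SOME r. r \<in> gg ` S \<and> conjW r x)"

lemma rep_props: assumes "x \<in> Q" shows "rep x \<in> gg ` S" "conjW (rep x) x"
proof -
  have "\<exists>r. r \<in> gg ` S \<and> conjW r x" using Q_gen_conj[OF assms] by blast
  then have "rep x \<in> gg ` S \<and> conjW (rep x) x" unfolding rep_def by (rule someI_ex)
  then show "rep x \<in> gg ` S" "conjW (rep x) x" by auto
qed

lemma rep_Q: "x \<in> Q \<Longrightarrow> rep x \<in> Q"
  by (metis imageE rep_props(1) gg_Q)

lemma rep_cong: assumes "conjW x y" shows "rep x = rep y"
proof -
  have "\<And>r. conjW r x \<longleftrightarrow> conjW r y" using assms conjW_trans conjW_sym by blast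
  then show ?thesis unfolding rep_def by simp
qed

lemma rep_rep: "x \<in> Q \<Longrightarrow> rep (rep x) = rep x"
  using rep_cong rep_props by blast

definition Reps :: "'s word set set" where "Reps = rep ` Q"

lemma finite_Reps: "finite Reps"
proof -
  have "Reps \<subseteq> gg ` S" unfolding Reps_def using rep_props by auto
  then show ?thesis using finS finite_subset by blast
qed

lemma Reps_Q: "r \<in> Reps \<Longrightarrow> r \<in> Q" unfolding Reps_def using rep_Q by auto

lemma Reps_eq: assumes "r1 \<in> Reps" "r2 \<in> Reps" "conjW r1 r2" shows "r1 = r2"
proof -
  obtain x1 x2 where x: "x1 \<in> Q" "r1 = rep x1" "x2 \<in> Q" "r2 = rep x2"
    using assms(1,2) unfolding Reps_def by auto
  have "rep r1 = rep r2" using rep_cong[OF assms(3)] .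
  then show ?thesis using x rep_rep by metis
qed

definition RL :: "'s word set list" where
  "RL = (SOME l. distinct l \<and> set l = Reps)"

lemma RL: "distinct RL" "set RL = Reps"
proof -
  have "\<exists>l. distinct l \<and> set l = Reps" using finite_distinct_list[OF finite_Reps] by blast
  then have "distinct RL \<and> set RL = Reps" unfolding RL_def by (rule someI_ex)
  then show "distinct RL" "set RL = Reps" by auto
qed

lemma phi_surj_word:
  assumes "u \<in> lists (S \<times> UNIV)"
  shows "map (\<lambda>(s, b). (gg s, b)) u \<in> lists (Q \<times> UNIV)"
    "phi (pres_class Q Ra (map (\<lambda>(s, b). (gg s, b)) u)) = pres_class S Rc u"
proof -
  show l: "map (\<lambda>(s, b). (gg s, b)) u \<in> lists (Q \<times> UNIV)" using assms by (induction u) (auto simp: gg_Q)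
  show "phi (pres_class Q Ra (map (\<lambda>(s, b). (gg s, b)) u)) = pres_class S Rc u"
    using phi_val[OF l] classW_eval[OF assms] eval_word_map[of Wg "\<lambda>x. x" gg u]
    by (simp add: comp_def)
qed

lemma phi_surj: "phi ` carrier Ad = carrier Wg"
proof
  show "phi ` carrier Ad \<subseteq> carrier Wg" using phi_carrier by auto
next
  show "carrier Wg \<subseteq> phi ` carrier Ad"
  proof
    fix w assume "w \<in> carrier Wg"
    then obtain u where u: "u \<in> lists (S \<times> UNIV)" "w = pres_class S Rc u" by (auto simp: carrierW)
    then show "w \<in> phi ` carrier Ad" using phi_surj_word[OF u(1)] carrierA by auto
  qed
qed

lemma zz_conj: assumes "conjW x y" shows "zz x = zz y"
proof -
  obtain w where w: "w \<in> carrier Wg" "y = inv\<^bsub>Wg\<^esub> w \<otimes>\<^bsub>Wg\<^esub> x \<otimes>\<^bsub>Wg\<^esub> w" "x \<in> Q" "y \<in> Q"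
    using assms conjW_def by auto
  obtain h where h: "h \<in> carrier Ad" "phi h = w" using phi_surj w by (metis imageE)
  have ey: "ee y = inv\<^bsub>Ad\<^esub> h \<otimes>\<^bsub>Ad\<^esub> ee x \<otimes>\<^bsub>Ad\<^esub> h" using conj_lemma[OF h(1)] w h by simp
  have ex: "ee x \<in> carrier Ad" using w ee_carrier by auto
  have "zz y = inv\<^bsub>Ad\<^esub> h \<otimes>\<^bsub>Ad\<^esub> zz x \<otimes>\<^bsub>Ad\<^esub> h"
    unfolding zz_def ey using ex h by (simp add: A.m_assoc)
  also have "\<dots> = inv\<^bsub>Ad\<^esub> h \<otimes>\<^bsub>Ad\<^esub> (zz x \<otimes>\<^bsub>Ad\<^esub> h)"
    using zz_carrier[OF w(3)] h by (simp add: A.m_assoc)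
  also have "\<dots> = inv\<^bsub>Ad\<^esub> h \<otimes>\<^bsub>Ad\<^esub> (h \<otimes>\<^bsub>Ad\<^esub> zz x)"
    by (simp only: zz_central[OF w(3) h(1)])
  also have "\<dots> = zz x" using h zz_carrier[OF w(3)] by simp
  finally show ?thesis by simp
qed

definition Fl :: "'s word set list \<Rightarrow> ('s word set \<Rightarrow> int) \<Rightarrow> 's word set word set" where
  "Fl L c = foldr (\<lambda>r acc. zz r [^]\<^bsub>Ad\<^esub> c r \<otimes>\<^bsub>Ad\<^esub> acc) L \<one>\<^bsub>Ad\<^esub>"

lemma Fl_Nil[simp]: "Fl [] c = \<one>\<^bsub>Ad\<^esub>" by (simp add: Fl_def)
lemma Fl_Cons[simp]: "Fl (r # L) c = zz r [^]\<^bsub>Ad\<^esub> c r \<otimes>\<^bsub>Ad\<^esub> Fl L c" by (simp add: Fl_def)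

lemma Fl_carrier: "set L \<subseteq> Q \<Longrightarrow> Fl L c \<in> carrier Ad"
  by (induction L) (auto simp: zz_carrier)

lemma zzpow_central: "x \<in> Q \<Longrightarrow> h \<in> carrier Ad \<Longrightarrow> zz x [^]\<^bsub>Ad\<^esub> (k::int) \<otimes>\<^bsub>Ad\<^esub> h = h \<otimes>\<^bsub>Ad\<^esub> zz x [^]\<^bsub>Ad\<^esub> k"
  using A.central_int_pow[OF zz_carrier zz_central] by blast

lemma Fl_central: "set L \<subseteq> Q \<Longrightarrow> h \<in> carrier Ad \<Longrightarrow> Fl L c \<otimes>\<^bsub>Ad\<^esub> h = h \<otimes>\<^bsub>Ad\<^esub> Fl L c"
proof (induction L)
  case Nil then show ?case by simp
next
  case (Cons r L)
  have r: "r \<in> Q" using Cons by auto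
  have c1: "zz r [^]\<^bsub>Ad\<^esub> c r \<in> carrier Ad" using zz_carrier r by simp
  have c2: "Fl L c \<in> carrier Ad" using Cons Fl_carrier by auto
  have "Fl (r # L) c \<otimes>\<^bsub>Ad\<^esub> h = zz r [^]\<^bsub>Ad\<^esub> c r \<otimes>\<^bsub>Ad\<^esub> (Fl L c \<otimes>\<^bsub>Ad\<^esub> h)"
    using c1 c2 Cons by (simp add: A.m_assoc)
  also have "\<dots> = (zz r [^]\<^bsub>Ad\<^esub> c r \<otimes>\<^bsub>Ad\<^esub> h) \<otimes>\<^bsub>Ad\<^esub> Fl L c"
    using Cons c1 c2 by (simp add: A.m_assoc)
  also have "\<dots> = h \<otimes>\<^bsub>Ad\<^esub> Fl (r # L) c"
    using zzpow_central[OF r Cons.prems(2)] c1 c2 Cons by (simp add: A.m_assoc)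
  finally show ?case .
qed

lemma Fl_mult: "set L \<subseteq> Q \<Longrightarrow> Fl L c \<otimes>\<^bsub>Ad\<^esub> Fl L d = Fl L (\<lambda>r. c r + d r)"
proof (induction L)
  case Nil then show ?case by simp
next
  case (Cons r L)
  have r: "r \<in> Q" using Cons by auto
  have c1: "zz r [^]\<^bsub>Ad\<^esub> c r \<in> carrier Ad" "zz r [^]\<^bsub>Ad\<^esub> d r \<in> carrier Ad" using zz_carrier r by auto
  have c2: "Fl L c \<in> carrier Ad" "Fl L d \<in> carrier Ad" using Cons Fl_carrier by auto
  have "Fl (r # L) c \<otimes>\<^bsub>Ad\<^esub> Fl (r # L) d =
      zz r [^]\<^bsub>Ad\<^esub> c r \<otimes>\<^bsub>Ad\<^esub> (Fl L c \<otimes>\<^bsub>Ad\<^esub> zz r [^]\<^bsub>Ad\<^esub> d r) \<otimes>\<^bsub>Ad\<^esub> Fl L d"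
    using c1 c2 by (simp add: A.m_assoc)
  also have "\<dots> = zz r [^]\<^bsub>Ad\<^esub> c r \<otimes>\<^bsub>Ad\<^esub> (zz r [^]\<^bsub>Ad\<^esub> d r \<otimes>\<^bsub>Ad\<^esub> Fl L c) \<otimes>\<^bsub>Ad\<^esub> Fl L d"
    using Fl_central[of L "zz r [^]\<^bsub>Ad\<^esub> d r" c] Cons c1 by simp
  also have "\<dots> = (zz r [^]\<^bsub>Ad\<^esub> c r \<otimes>\<^bsub>Ad\<^esub> zz r [^]\<^bsub>Ad\<^esub> d r) \<otimes>\<^bsub>Ad\<^esub> (Fl L c \<otimes>\<^bsub>Ad\<^esub> Fl L d)"
    using c1 c2 by (simp add: A.m_assoc)
  also have "\<dots> = Fl (r # L) (\<lambda>r. c r + d r)"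
    using Cons A.int_pow_mult[OF zz_carrier[OF r], of "c r" "d r"] by simp
  finally show ?case .
qed

lemma Fl_zero: "set L \<subseteq> Q \<Longrightarrow> (\<And>r. r \<in> set L \<Longrightarrow> c r = 0) \<Longrightarrow> Fl L c = \<one>\<^bsub>Ad\<^esub>"
  by (induction L) auto

lemma Fl_inv: "set L \<subseteq> Q \<Longrightarrow> inv\<^bsub>Ad\<^esub> Fl L c = Fl L (\<lambda>r. - c r)"
proof -
  assume L: "set L \<subseteq> Q"
  have "Fl L (\<lambda>r. - c r) \<otimes>\<^bsub>Ad\<^esub> Fl L c = \<one>\<^bsub>Ad\<^esub>"
    using Fl_mult[OF L] Fl_zero[OF L] by simp
  then show ?thesis using A.inv_equality Fl_carrier[OF L] by metis
qed

lemma Fl_delta: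
  assumes "distinct L" "set L \<subseteq> Q" "x \<in> set L"
  shows "Fl L (\<lambda>r. if r = x then 1 else 0) = zz x"
  using assms
proof (induction L)
  case Nil then show ?case by simp
next
  case (Cons r L)
  show ?case
  proof (cases "r = x")
    case True
    then have "Fl L (\<lambda>r. if r = x then 1 else 0) = \<one>\<^bsub>Ad\<^esub>"
      using Cons by (intro Fl_zero) auto
    then show ?thesis using True Cons zz_carrier by simp
  next
    case False
    have "x \<in> Q" using Cons by auto
    then show ?thesis using False Cons zz_carrier[of x] by simp
  qed
qed

definition NN :: "'s word set word set set" where "NN = range (Fl RL)"

lemma RL_Q: "set RL \<subseteq> Q" using RL Reps_Q by auto

lemma zz_NN: assumes "x \<in> Q" shows "zz x \<in> NN"
proof -
  have "zz x = zz (rep x)" using zz_conj[OF conjW_sym[OF rep_props(2)[OF assms]]] by simp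
  also have "\<dots> = Fl RL (\<lambda>r. if r = rep x then 1 else 0)"
    using Fl_delta[OF RL(1) RL_Q] RL(2) assms unfolding Reps_def by auto
  finally show ?thesis unfolding NN_def by auto
qed

lemma NN_normal: "NN \<lhd> Ad"
proof -
  have sg: "subgroup NN Ad"
  proof (rule subgroup.intro)
    show "NN \<subseteq> carrier Ad" unfolding NN_def using Fl_carrier[OF RL_Q] by auto
    show "\<one>\<^bsub>Ad\<^esub> \<in> NN" unfolding NN_def using Fl_zero[OF RL_Q, of "\<lambda>_. 0"] by (metis rangeI)
    fix x y assume "x \<in> NN" "y \<in> NN"
    then show "x \<otimes>\<^bsub>Ad\<^esub> y \<in> NN" unfolding NN_def using Fl_mult[OF RL_Q] by auto
  next
    fix x assume "x \<in> NN"
    then show "inv\<^bsub>Ad\<^esub> x \<in> NN" unfolding NN_def using Fl_inv[OF RL_Q] by auto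
  qed
  show ?thesis
    unfolding A.normal_inv_iff
  proof (intro conjI sg ballI)
    fix x h assume x: "x \<in> carrier Ad" and h: "h \<in> NN"
    have hc: "h \<in> carrier Ad" using h sg subgroup.subset by blast
    have "x \<otimes>\<^bsub>Ad\<^esub> h = h \<otimes>\<^bsub>Ad\<^esub> x" using h x Fl_central[OF RL_Q] unfolding NN_def by auto
    then have "x \<otimes>\<^bsub>Ad\<^esub> h \<otimes>\<^bsub>Ad\<^esub> inv\<^bsub>Ad\<^esub> x = h \<otimes>\<^bsub>Ad\<^esub> x \<otimes>\<^bsub>Ad\<^esub> inv\<^bsub>Ad\<^esub> x" by (simp only:)
    also have "\<dots> = h" using x hc by (simp add: A.m_assoc)
    finally have "x \<otimes>\<^bsub>Ad\<^esub> h \<otimes>\<^bsub>Ad\<^esub> inv\<^bsub>Ad\<^esub> x = h" .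
    then show "x \<otimes>\<^bsub>Ad\<^esub> h \<otimes>\<^bsub>Ad\<^esub> inv\<^bsub>Ad\<^esub> x \<in> NN" using h by simp
  qed
qed

end



declare mult_FactGroup[simp del] one_FactGroup[simp del]

context cox begin

sublocale Nn: normal NN Ad by (rule NN_normal)

abbreviation "Ab \<equiv> Ad Mod NN"

lemma groupAb: "group Ab" by (rule Nn.factorgroup_is_group)

sublocale B: group Ab by (rule groupAb)

definition pr :: "'s word set word set \<Rightarrow> 's word set word set set" where
  "pr a = NN #>\<^bsub>Ad\<^esub> a"

lemma pr_hom: "pr \<in> hom Ad Ab"
  unfolding pr_def by (rule Nn.r_coset_hom_Mod)

sublocale prG: group_hom Ad Ab pr
  using pr_hom by (simp add: group_hom_def group_hom_axioms_def groupA groupAb)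

lemma NN_sub: "subgroup NN Ad" using NN_normal normal_imp_subgroup by blast

lemma pr_NN: "g \<in> NN \<Longrightarrow> pr g = \<one>\<^bsub>Ab\<^esub>"
  unfolding pr_def using A.coset_join2[OF _ NN_sub] subgroup.subset[OF NN_sub] by (auto simp: one_FactGroup)

lemma pr_one_NN: "g \<in> carrier Ad \<Longrightarrow> pr g = \<one>\<^bsub>Ab\<^esub> \<Longrightarrow> g \<in> NN"
  unfolding pr_def using A.coset_join1[OF _ _ NN_sub] by (auto simp: one_FactGroup)

definition fb :: "'s word set \<Rightarrow> 's word set word set set" where
  "fb x = pr (ee x)"

lemma fb_carrier: "x \<in> Q \<Longrightarrow> fb x \<in> carrier Ab"
  unfolding fb_def using ee_carrier by simp

lemma fb_sq: assumes "x \<in> Q" shows "fb x \<otimes>\<^bsub>Ab\<^esub> fb x = \<one>\<^bsub>Ab\<^esub>"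
proof -
  have "fb x \<otimes>\<^bsub>Ab\<^esub> fb x = pr (zz x)"
    unfolding fb_def zz_def using ee_carrier[OF assms] by simp
  then show ?thesis using pr_NN zz_NN assms by simp
qed

lemma fb_inv: "x \<in> Q \<Longrightarrow> inv\<^bsub>Ab\<^esub> fb x = fb x"
  using fb_sq fb_carrier B.inv_equality by blast

lemma fb_qop: assumes "x \<in> Q" "y \<in> Q" shows "fb (qop x y) = fb y \<otimes>\<^bsub>Ab\<^esub> fb x \<otimes>\<^bsub>Ab\<^esub> fb y"
proof -
  have "fb (qop x y) = pr (inv\<^bsub>Ad\<^esub> ee y \<otimes>\<^bsub>Ad\<^esub> ee x \<otimes>\<^bsub>Ad\<^esub> ee y)"
    unfolding fb_def using ee_rel[OF assms] by simp
  also have "\<dots> = inv\<^bsub>Ab\<^esub> fb y \<otimes>\<^bsub>Ab\<^esub> fb x \<otimes>\<^bsub>Ab\<^esub> fb y"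
    unfolding fb_def using ee_carrier assms by simp
  finally show ?thesis using fb_inv[OF assms(2)] by simp
qed

lemma Wg_def': "Wg = presented_group S Rc" by (simp add: coxeter_group_def)

lemma Rc_eval: assumes "r \<in> Rc" shows "eval_word Ab (fb \<circ> gg) r = \<one>\<^bsub>Ab\<^esub>"
proof -
  obtain s t k where stk: "r = concat (replicate k [(s, True), (t, True)])" "s \<in> S" "t \<in> S" "m s t = enat k"
    using assms unfolding coxeter_rels_def by blast
  have "eval_word Ab (fb \<circ> gg) r = ((fb \<circ> gg) s \<otimes>\<^bsub>Ab\<^esub> (fb \<circ> gg) t) [^]\<^bsub>Ab\<^esub> k"
    unfolding stk(1) using stk gg_Q fb_carrier by (intro B.eval_concat_rep) auto
  also have "\<dots> = \<one>\<^bsub>Ab\<^esub>"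
    using braid[OF groupAb fb_carrier fb_sq fb_qop stk(2-4)] by simp
  finally show ?thesis .
qed

definition Th :: "'s word set \<Rightarrow> 's word set word set set" where
  "Th = ind_hom Ab (fb \<circ> gg)"

lemma fbgg: "(fb \<circ> gg) ` S \<subseteq> carrier Ab" using fb_carrier gg_Q by auto

lemma Th_hom: "Th \<in> hom Wg Ab"
  unfolding Th_def Wg_def' using fbgg Rc_lists Rc_eval by (intro B.ind_hom_hom) auto

lemma Th_val: "u \<in> lists (S \<times> UNIV) \<Longrightarrow> Th (pres_class S Rc u) = eval_word Ab (fb \<circ> gg) u"
  unfolding Th_def using fbgg Rc_lists Rc_eval by (intro B.ind_hom_val) auto

sublocale ThG: group_hom Wg Ab Th
  using Th_hom by (simp add: group_hom_def group_hom_axioms_def groupW groupAb)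

lemma Th_Q: assumes "x \<in> Q" shows "Th x = fb x"
proof -
  obtain w s where ws: "x = inv\<^bsub>Wg\<^esub> w \<otimes>\<^bsub>Wg\<^esub> gg s \<otimes>\<^bsub>Wg\<^esub> w" "w \<in> carrier Wg" "s \<in> S"
    using assms Q_def' by blast
  obtain u where u: "u \<in> lists (S \<times> UNIV)" "w = pres_class S Rc u" using ws carrierW by auto
  define hu where "hu = pres_class Q Ra (map (\<lambda>(s, b). (gg s, b)) u)"
  have l: "map (\<lambda>(s, b). (gg s, b)) u \<in> lists (Q \<times> UNIV)" using phi_surj_word[OF u(1)] by simp
  have hu: "hu \<in> carrier Ad" using l carrierA hu_def by auto
  have phu: "phi hu = w" using phi_surj_word[OF u(1)] u hu_def by simp
  have eex: "inv\<^bsub>Ad\<^esub> hu \<otimes>\<^bsub>Ad\<^esub> ee (gg s) \<otimes>\<^bsub>Ad\<^esub> hu = ee x"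
    using conj_lemma[OF hu] gg_Q[OF ws(3)] phu ws by simp
  have phu2: "pr hu = Th w"
  proof -
    have "pr hu = pr (eval_word Ad ee (map (\<lambda>(s, b). (gg s, b)) u))"
      using classA_eval[OF l] hu_def by simp
    also have "\<dots> = eval_word Ab (pr \<circ> ee) (map (\<lambda>(s, b). (gg s, b)) u)"
      using hom_eval_word[OF pr_hom groupA groupAb l] ee_carrier by auto
    also have "\<dots> = eval_word Ab (fb \<circ> gg) u"
      using eval_word_map[of Ab "pr \<circ> ee" gg u] by (simp add: fb_def comp_def)
    also have "\<dots> = Th w" using Th_val[OF u(1)] u by simp
    finally show ?thesis .
  qed
  have Tgs: "Th (gg s) = fb (gg s)"
    using Th_val[of "[(s, True)]"] ws fb_carrier gg_Q by (simp add: pres_gen_def)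
  have "fb x = pr (inv\<^bsub>Ad\<^esub> hu \<otimes>\<^bsub>Ad\<^esub> ee (gg s) \<otimes>\<^bsub>Ad\<^esub> hu)" unfolding fb_def eex ..
  also have "\<dots> = inv\<^bsub>Ab\<^esub> (pr hu) \<otimes>\<^bsub>Ab\<^esub> fb (gg s) \<otimes>\<^bsub>Ab\<^esub> pr hu"
    using hu ee_carrier gg_Q ws by (simp add: fb_def)
  also have "\<dots> = Th x"
    using phu2 Tgs ws gg_carrier by simp
  finally show ?thesis by simp
qed

lemma Th_phi: assumes "g \<in> carrier Ad" shows "Th (phi g) = pr g"
  using assms unfolding Ad_def'
proof (induction rule: pres_induct)
  case one then show ?case unfolding Ad_def'[symmetric] by simp
next
  case (gen x h)
  note h = gen(2)[folded Ad_def'] and IH = gen(3)[folded Ad_def']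
  have ex: "ee x \<in> carrier Ad" using gen ee_carrier by auto
  have xc: "x \<in> carrier Wg" using gen Q_carrier by auto
  have "Th (phi (ee x \<otimes>\<^bsub>Ad\<^esub> h)) = pr (ee x \<otimes>\<^bsub>Ad\<^esub> h)"
    using ex h IH phi_ee gen(1) xc phi_carrier Th_Q by (simp add: fb_def)
  moreover have "Th (phi (inv\<^bsub>Ad\<^esub> ee x \<otimes>\<^bsub>Ad\<^esub> h)) = pr (inv\<^bsub>Ad\<^esub> ee x \<otimes>\<^bsub>Ad\<^esub> h)"
    using ex h IH phi_ee gen(1) xc phi_carrier Th_Q by (simp add: fb_def)
  ultimately show ?case unfolding Ad_def'[symmetric] by simp
qed

lemma ker_NN: assumes "g \<in> carrier Ad" "phi g = \<one>\<^bsub>Wg\<^esub>" shows "g \<in> NN"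
  using Th_phi[OF assms(1)] assms pr_one_NN by simp

definition psi :: "'s word set \<Rightarrow> 's word set word set \<Rightarrow> int" where
  "psi r = ind_hom integer_group (\<lambda>x. if conjW x r then 1 else 0)"

lemma psi_rel: assumes "rr \<in> Ra" shows "eval_word integer_group (\<lambda>x. if conjW x r then 1 else 0) rr = \<one>\<^bsub>integer_group\<^esub>"
proof -
  obtain x y where xy: "rr = [(y, False), (x, True), (y, True), (qop x y, False)]" "x \<in> Q" "y \<in> Q"
    using assms unfolding adjoint_rels_def by blast
  have "conjW (qop x y) r \<longleftrightarrow> conjW x r"
    using conjW_qop[OF xy(2,3)] conjW_trans conjW_sym by blast
  then show ?thesis using xy by simp
qed

lemma psi_hom: "psi r \<in> hom Ad integer_group"
  unfolding psi_def Ad_def' using Ra_lists psi_rel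
  by (intro group.ind_hom_hom[OF group_integer_group]) auto

lemma psi_ee: "x \<in> Q \<Longrightarrow> psi r (ee x) = (if conjW x r then 1 else 0)"
  unfolding psi_def pres_gen_def
  using group.ind_hom_val[OF group_integer_group, of "\<lambda>x. if conjW x r then 1 else 0" Q Ra "[(x, True)]"]
    Ra_lists psi_rel by auto

lemma psi_zz: "x \<in> Q \<Longrightarrow> psi r (zz x) = (if conjW x r then 2 else 0)"
  unfolding zz_def using hom_mult[OF psi_hom] ee_carrier psi_ee by simp

lemma psi_zzpow: "x \<in> Q \<Longrightarrow> psi r (zz x [^]\<^bsub>Ad\<^esub> (k::int)) = k * psi r (zz x)"
  using hom_int_pow[OF psi_hom zz_carrier groupA group_integer_group] by simp

lemma psi_Fl:
  assumes "distinct L" "set L \<subseteq> Reps" "r \<in> Reps"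
  shows "psi r (Fl L c) = (if r \<in> set L then 2 * c r else 0)"
  using assms(1,2)
proof (induction L)
  case Nil then show ?case using hom_one[OF psi_hom groupA group_integer_group] by simp
next
  case (Cons r' L)
  have r'Q: "r' \<in> Q" using Cons Reps_Q by auto
  have LQ: "set L \<subseteq> Q" using Cons Reps_Q by auto
  have "psi r (Fl (r' # L) c) = psi r (zz r' [^]\<^bsub>Ad\<^esub> c r') + psi r (Fl L c)"
    using hom_mult[OF psi_hom] zz_carrier[OF r'Q] Fl_carrier[OF LQ] by simp
  also have "\<dots> = c r' * (if conjW r' r then 2 else 0) + (if r \<in> set L then 2 * c r else 0)"
    using psi_zzpow[OF r'Q] psi_zz[OF r'Q] Cons by simp
  also have "\<dots> = (if r \<in> set (r' # L) then 2 * c r else 0)"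
  proof (cases "r' = r")
    case True
    then show ?thesis using Cons conjW_refl r'Q by auto
  next
    case False
    then have "\<not> conjW r' r" using Reps_eq Cons assms(3) by auto
    then show ?thesis using False by simp
  qed
  finally show ?case .
qed

lemma psi_derived: assumes "g \<in> derived Ad (carrier Ad)" shows "psi r g = 0"
proof -
  interpret ps: group_hom Ad integer_group "psi r"
    using psi_hom by (simp add: group_hom_def group_hom_axioms_def groupA)
  have "derived_set Ad (carrier Ad) \<subseteq> kernel Ad integer_group (psi r)"
  proof
    fix z assume "z \<in> derived_set Ad (carrier Ad)"
    then obtain a b where ab: "a \<in> carrier Ad" "b \<in> carrier Ad"
      "z = a \<otimes>\<^bsub>Ad\<^esub> b \<otimes>\<^bsub>Ad\<^esub> inv\<^bsub>Ad\<^esub> a \<otimes>\<^bsub>Ad\<^esub> inv\<^bsub>Ad\<^esub> b" by blast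
    then show "z \<in> kernel Ad integer_group (psi r)"
      unfolding kernel_def using ps.hom_mult ps.hom_inv by simp
  qed
  then have "derived Ad (carrier Ad) \<subseteq> kernel Ad integer_group (psi r)"
    unfolding derived_def using A.generate_subgroup_incl ps.subgroup_kernel by blast
  then show ?thesis using assms unfolding kernel_def by auto
qed

lemma inj_derived:
  assumes g: "g \<in> derived Ad (carrier Ad)" and pg: "phi g = \<one>\<^bsub>Wg\<^esub>"
  shows "g = \<one>\<^bsub>Ad\<^esub>"
proof -
  have gc: "g \<in> carrier Ad" using g A.derived_in_carrier by blast
  obtain c where c: "g = Fl RL c" using ker_NN[OF gc pg] unfolding NN_def by auto
  have "c r = 0" if r: "r \<in> set RL" for r
  proof -
    have "psi r g = 2 * c r" using psi_Fl[OF RL(1)] RL(2) r c by auto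
    then show ?thesis using psi_derived[OF g] by simp
  qed
  then show ?thesis using c Fl_zero[OF RL_Q] by auto
qed

lemma derived_img: "phi ` derived Ad (carrier Ad) = derived Wg (carrier Wg)"
proof -
  have K: "derived_set Ad (carrier Ad) \<subseteq> carrier Ad" by (rule A.derived_set_in_carrier) simp
  have img: "phi ` derived_set Ad (carrier Ad) = derived_set Wg (carrier Wg)"
  proof
    show "phi ` derived_set Ad (carrier Ad) \<subseteq> derived_set Wg (carrier Wg)"
    proof
      fix z assume "z \<in> phi ` derived_set Ad (carrier Ad)"
      then obtain a b where ab: "a \<in> carrier Ad" "b \<in> carrier Ad"
        "z = phi (a \<otimes>\<^bsub>Ad\<^esub> b \<otimes>\<^bsub>Ad\<^esub> inv\<^bsub>Ad\<^esub> a \<otimes>\<^bsub>Ad\<^esub> inv\<^bsub>Ad\<^esub> b)" by blast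
      have "z = phi a \<otimes>\<^bsub>Wg\<^esub> phi b \<otimes>\<^bsub>Wg\<^esub> inv\<^bsub>Wg\<^esub> phi a \<otimes>\<^bsub>Wg\<^esub> inv\<^bsub>Wg\<^esub> phi b"
        unfolding ab(3) using ab(1,2) by (simp add: phiG.hom_mult phiG.hom_inv)
      moreover have "phi a \<in> carrier Wg" "phi b \<in> carrier Wg" using ab phi_carrier by auto
      ultimately show "z \<in> derived_set Wg (carrier Wg)" by blast
    qed
  next
    show "derived_set Wg (carrier Wg) \<subseteq> phi ` derived_set Ad (carrier Ad)"
    proof
      fix z assume "z \<in> derived_set Wg (carrier Wg)"
      then obtain a b where ab: "a \<in> carrier Wg" "b \<in> carrier Wg"
        "z = a \<otimes>\<^bsub>Wg\<^esub> b \<otimes>\<^bsub>Wg\<^esub> inv\<^bsub>Wg\<^esub> a \<otimes>\<^bsub>Wg\<^esub> inv\<^bsub>Wg\<^esub> b" by blast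
      from ab(1) phi_surj obtain a' where a': "a' \<in> carrier Ad" "a = phi a'" by blast
      from ab(2) phi_surj obtain b' where b': "b' \<in> carrier Ad" "b = phi b'" by blast
      have "z = phi (a' \<otimes>\<^bsub>Ad\<^esub> b' \<otimes>\<^bsub>Ad\<^esub> inv\<^bsub>Ad\<^esub> a' \<otimes>\<^bsub>Ad\<^esub> inv\<^bsub>Ad\<^esub> b')"
        unfolding ab(3) a'(2) b'(2) using a'(1) b'(1) by (simp add: phiG.hom_mult phiG.hom_inv)
      moreover have "a' \<otimes>\<^bsub>Ad\<^esub> b' \<otimes>\<^bsub>Ad\<^esub> inv\<^bsub>Ad\<^esub> a' \<otimes>\<^bsub>Ad\<^esub> inv\<^bsub>Ad\<^esub> b' \<in> derived_set Ad (carrier Ad)"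
        using a'(1) b'(1) by blast
      ultimately show "z \<in> phi ` derived_set Ad (carrier Ad)" by blast
    qed
  qed
  have "derived Wg (carrier Wg) = generate Wg (phi ` derived_set Ad (carrier Ad))"
    unfolding derived_def img ..
  also have "\<dots> = phi ` derived Ad (carrier Ad)"
    unfolding derived_def by (rule phiG.generate_img[OF K])
  finally show ?thesis by (rule sym)
qed

lemma main:
  "phi \<in> hom Ad Wg \<and>
   phi \<in> iso (Ad\<lparr>carrier := derived Ad (carrier Ad)\<rparr>) (Wg\<lparr>carrier := derived Wg (carrier Wg)\<rparr>)"
proof (intro conjI)
  show "phi \<in> hom Ad Wg" by (rule phi_hom)
  have DA: "derived Ad (carrier Ad) \<subseteq> carrier Ad" by (rule A.derived_in_carrier) simp
  have sgA: "subgroup (derived Ad (carrier Ad)) Ad" by (rule A.derived_is_subgroup) simp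
  have hom': "phi \<in> hom (Ad\<lparr>carrier := derived Ad (carrier Ad)\<rparr>) (Wg\<lparr>carrier := derived Wg (carrier Wg)\<rparr>)"
  proof (rule homI)
    fix x assume "x \<in> carrier (Ad\<lparr>carrier := derived Ad (carrier Ad)\<rparr>)"
    then have "x \<in> derived Ad (carrier Ad)" by simp
    then show "phi x \<in> carrier (Wg\<lparr>carrier := derived Wg (carrier Wg)\<rparr>)"
      using derived_img by auto
  next
    fix x y assume "x \<in> carrier (Ad\<lparr>carrier := derived Ad (carrier Ad)\<rparr>)"
      "y \<in> carrier (Ad\<lparr>carrier := derived Ad (carrier Ad)\<rparr>)"
    then have "x \<in> carrier Ad" "y \<in> carrier Ad" using DA by auto
    then show "phi (x \<otimes>\<^bsub>Ad\<lparr>carrier := derived Ad (carrier Ad)\<rparr>\<^esub> y) =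
       phi x \<otimes>\<^bsub>Wg\<lparr>carrier := derived Wg (carrier Wg)\<rparr>\<^esub> phi y"
      by (simp add: phiG.hom_mult)
  qed
  have inj: "inj_on phi (derived Ad (carrier Ad))"
  proof (rule inj_onI)
    fix a b assume a: "a \<in> derived Ad (carrier Ad)" and b: "b \<in> derived Ad (carrier Ad)" and e: "phi a = phi b"
    have ac: "a \<in> carrier Ad" and bc: "b \<in> carrier Ad" using a b DA by auto
    have d: "a \<otimes>\<^bsub>Ad\<^esub> inv\<^bsub>Ad\<^esub> b \<in> derived Ad (carrier Ad)"
      using a b sgA subgroup.m_closed subgroup.m_inv_closed by metis
    have "phi (a \<otimes>\<^bsub>Ad\<^esub> inv\<^bsub>Ad\<^esub> b) = \<one>\<^bsub>Wg\<^esub>" using ac bc e phi_carrier by simp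
    then have "a \<otimes>\<^bsub>Ad\<^esub> inv\<^bsub>Ad\<^esub> b = \<one>\<^bsub>Ad\<^esub>" using inj_derived d by blast
    then have "inv\<^bsub>Ad\<^esub> (inv\<^bsub>Ad\<^esub> b) = a" using ac bc by (intro A.inv_equality) auto
    then show "a = b" using bc by simp
  qed
  show "phi \<in> iso (Ad\<lparr>carrier := derived Ad (carrier Ad)\<rparr>) (Wg\<lparr>carrier := derived Wg (carrier Wg)\<rparr>)"
    unfolding iso_def bij_betw_def using hom' inj derived_img by auto
qed

end

theorem theorem5p1:
  fixes S :: "'s set" and m :: "'s \<Rightarrow> 's \<Rightarrow> enat"
  assumes "coxeter_matrix S m"
  shows "adjoint_phi S m \<in> hom (adjoint_group S m) (coxeter_group S m)
    \<and> adjoint_phi S m \<in> iso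
        ((adjoint_group S m)\<lparr>carrier := derived (adjoint_group S m) (carrier (adjoint_group S m))\<rparr>)
        ((coxeter_group S m)\<lparr>carrier := derived (coxeter_group S m) (carrier (coxeter_group S m))\<rparr>)"
  using cox.main[OF cox.intro[OF assms]] .


end
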